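(* Let $\sigma,\tau,\bar\sigma,\bar\tau$ satisfy the Standing Hypothesis and let $m,n,x$ be integers with $0\le x<n\le m$. Then $$\{\sigma,m,n,\tau\,|\,\bar\sigma,x,\bar\tau\}-\{\sigma,m+1,n-1,\tau\,|\,\bar\sigma,x,\bar\tau\} =\{\sigma,m,n,\tau\,|\,\bar\sigma,n,\bar\tau\}+\{\sigma,m+1,n-1+\tau_1,\tau\backslash\tau_1\,|\,\bar\sigma,n,\bar\tau\backslash\bar\tau_1\},$$ where the second term on the right is omitted if $t=0$.
   Context: Overlap notation: for $\alpha=(\alpha_1,\dots,\alpha_L)$ with $\alpha_i\ge1$ and $\beta=(\beta_1,\dots,\beta_{L-1})$ with $0\le\beta_i\le\min\{\alpha_i,\alpha_{i+1}\}$, $(\alpha\,|\,\beta)$ is the skew diagram $\lambda/\mu$ (boxes $(i,j)$ with $\mu_i<j\le\lambda_i$, identified up to deleting empty rows/columns) with $L$ nonempty rows, $\lambda_i-\mu_i=\alpha_i$, $\lambda_{i+1}-\mu_i=\beta_i$ (row $i$ has $\alpha_i$ boxes, rows $i,i+1$ share $\beta_i$ columns); $\{\alpha\,|\,\beta\}=s_{\lambda/\mu}$ is its skew Schur function (generating function of semistandard Young tableaux of that shape). Commas denote concatenation of sequences. Standing Hypothesis: $\sigma=(\sigma_1,\dots,\sigma_s)$, $\tau=(\tau_1,\dots,\tau_t)$ compositions, $s,t\ge0$; $\bar\sigma,\bar\tau$ sequences of non-negative integers of lengths $s,t$; $\bar\sigma_s=1$ if $s>0$; $\bar\tau_1=1$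 if $t>0$; $\bar\sigma_i\le\min\{\sigma_i,\sigma_{i+1}\}$ ($1\le i<s$), $\bar\tau_i\le\min\{\tau_i,\tau_{i-1}\}$ ($1<i\le t$). $\sigma\backslash\sigma_s$ removes the last part of $\sigma$, $\tau\backslash\tau_1$ removes the first part of $\tau$, and similarly for $\bar\sigma\backslash\bar\sigma_s$, $\bar\tau\backslash\bar\tau_1$. *)

theory Defs
  imports Main
begin

(* Rows are indexed 0..L-1 (top to bottom, English
   convention); row i occupies the integer columns row_off i < j <= row_off i + alpha_i,
   i.e. row_off i plays the role of mu_i (up to a global translation, which is irrelevant).
   The condition lambda_(i+1) - mu_i = beta_i gives
   mu_(i+1) = mu_i + beta_i - alpha_(i+1). *)

definition overlap_valid :: "nat list \<Rightarrow> nat list \<Rightarrow> bool" where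
  "overlap_valid \<alpha> \<beta> \<longleftrightarrow> length \<beta> + 1 = length \<alpha> \<and>
     (\<forall>i < length \<beta>. \<beta> ! i \<le> min (\<alpha> ! i) (\<alpha> ! Suc i))"

primrec row_off :: "nat list \<Rightarrow> nat list \<Rightarrow> nat \<Rightarrow> int" where
  "row_off \<alpha> \<beta> 0 = 0"
| "row_off \<alpha> \<beta> (Suc i) = row_off \<alpha> \<beta> i + int (\<beta> ! i) - int (\<alpha> ! Suc i)"

definition overlap_diagram :: "nat list \<Rightarrow> nat list \<Rightarrow> (nat \<times> int) set" where
  "overlap_diagram \<alpha> \<beta> =
     {(i, j). i < length \<alpha> \<and> row_off \<alpha> \<beta> i < j \<and> j \<le> row_off \<alpha> \<beta> i + int (\<alpha> ! i)}"

(* semistandard Young tableau of (skew) shape D with entries in {1,2,...};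
   T is 0 outside D so that tableaux are determined by their values on D *)
definition is_ssyt :: "(nat \<times> int) set \<Rightarrow> (nat \<times> int \<Rightarrow> nat) \<Rightarrow> bool" where
  "is_ssyt D T \<longleftrightarrow>
     (\<forall>b\<in>D. 1 \<le> T b) \<and> (\<forall>b. b \<notin> D \<longrightarrow> T b = 0) \<and>
     (\<forall>i j j'. (i, j) \<in> D \<longrightarrow> (i, j') \<in> D \<longrightarrow> j \<le> j' \<longrightarrow> T (i, j) \<le> T (i, j')) \<and>
     (\<forall>i i' j. (i, j) \<in> D \<longrightarrow> (i', j) \<in> D \<longrightarrow> i < i' \<longrightarrow> T (i, j) < T (i', j))"

(* {alpha | beta} as a symmetric function in x_1, x_2, ..., represented by its coefficient
   function: skew_schur alpha beta c is the coefficient of the monomial prod_k x_k^(c k),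
   i.e. the number of SSYT of shape (alpha | beta) with content c.  If the overlap data do
   not describe a skew diagram (beta_i > min(alpha_i, alpha_(i+1))) the value is 0.
   Parts alpha_i = 0 give empty rows, which are deleted. *)
definition skew_schur :: "nat list \<Rightarrow> nat list \<Rightarrow> (nat \<Rightarrow> nat) \<Rightarrow> int" where
  "skew_schur \<alpha> \<beta> c =
     (if overlap_valid \<alpha> \<beta> then
        int (card {T. is_ssyt (overlap_diagram \<alpha> \<beta>) T \<and>
                      (\<forall>k. card {b \<in> overlap_diagram \<alpha> \<beta>. T b = k} = c k)})
      else 0)"

end

theory Submission
  imports Defs "HOL-Library.Multiset"
begin

definition rowOK :: "nat \<Rightarrow> nat list \<Rightarrow> bool" where
  "rowOK a w \<longleftrightarrow> length w = a \<and> sorted w \<and> (\<forall>v\<in>set w. 1 \<le> v)"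

definition adj :: "nat \<Rightarrow> nat list \<Rightarrow> nat list \<Rightarrow> bool" where
  "adj b u v \<longleftrightarrow> (\<forall>j<b. u!j < v!(length v - b + j))"

definition rowsOK :: "nat list \<Rightarrow> nat list \<Rightarrow> nat list list \<Rightarrow> bool" where
  "rowsOK \<alpha> \<beta> W \<longleftrightarrow> length W = length \<alpha> \<and> (\<forall>i<length \<alpha>. rowOK (\<alpha>!i) (W!i))
      \<and> (\<forall>i<length \<beta>. adj (\<beta>!i) (W!i) (W!Suc i))"

definition wcont :: "nat list list \<Rightarrow> nat \<Rightarrow> nat" where
  "wcont W k = count (mset (concat W)) k"

lemma off_step:
  assumes "overlap_valid \<alpha> \<beta>" "Suc i < length \<alpha>"
  shows "row_off \<alpha> \<beta> (Suc i) \<le> row_off \<alpha> \<beta> i \<and>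
         row_off \<alpha> \<beta> (Suc i) + int (\<alpha>!Suc i) = row_off \<alpha> \<beta> i + int (\<beta>!i)
         \<and> \<beta>!i \<le> \<alpha>!i \<and> \<beta>!i \<le> \<alpha>!Suc i"
  using assms unfolding overlap_valid_def by auto

lemma off_mono:
  assumes "overlap_valid \<alpha> \<beta>" "i \<le> i'" "i' < length \<alpha>"
  shows "row_off \<alpha> \<beta> i' \<le> row_off \<alpha> \<beta> i \<and>
         row_off \<alpha> \<beta> i' + int (\<alpha>!i') \<le> row_off \<alpha> \<beta> i + int (\<alpha>!i)"
  using assms(2,3)
proof (induction i' rule: dec_induct)
  case base thus ?case by simp
next
  case (step k)
  from off_step[OF assms(1), of k] step show ?case by auto
qed

lemma mem_D: "(i,j) \<in> overlap_diagram \<alpha> \<beta> \<longleftrightarrow>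
   i < length \<alpha> \<and> row_off \<alpha> \<beta> i < j \<and> j \<le> row_off \<alpha> \<beta> i + int (\<alpha>!i)"
  unfolding overlap_diagram_def by auto

definition to_words :: "nat list \<Rightarrow> nat list \<Rightarrow> (nat \<times> int \<Rightarrow> nat) \<Rightarrow> nat list list" where
  "to_words \<alpha> \<beta> T = map (\<lambda>i. map (\<lambda>j. T (i, row_off \<alpha> \<beta> i + 1 + int j)) [0..<\<alpha>!i]) [0..<length \<alpha>]"

definition from_words :: "nat list \<Rightarrow> nat list \<Rightarrow> nat list list \<Rightarrow> (nat \<times> int \<Rightarrow> nat)" where
  "from_words \<alpha> \<beta> W = (\<lambda>(i,j). if (i,j) \<in> overlap_diagram \<alpha> \<beta> then W!i!nat (j - row_off \<alpha> \<beta> i - 1) else 0)"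

lemma count_concat_list: "count (mset (concat W)) k = sum_list (map (\<lambda>w. count (mset w) k) W)"
  by (induction W) auto

lemma count_concat_sum:
  "count (mset (concat W)) k = (\<Sum>i<length W. count (mset (W!i)) k)"
  unfolding count_concat_list sum_list_sum_nth by (simp add: atLeast0LessThan)

lemma count_filter: "count (mset xs) k = length (filter (\<lambda>y. y = k) xs)"
  by (induction xs) auto

lemma count_card: "count (mset xs) k = card {j. j < length xs \<and> xs!j = k}"
  by (simp add: count_filter length_filter_conv_card)

lemma content_eq:
  assumes "length W = length \<alpha>" "\<And>i. i < length \<alpha> \<Longrightarrow> length (W!i) = \<alpha>!i"
    "\<And>i j. i < length \<alpha> \<Longrightarrow> j < \<alpha>!i \<Longrightarrow> W!i!j = T (i, row_off \<alpha> \<beta> i + 1 + int j)"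
  shows "card {b \<in> overlap_diagram \<alpha> \<beta>. T b = k} = count (mset (concat W)) k"
proof -
  let ?off = "row_off \<alpha> \<beta>"
  let ?f = "\<lambda>(i,j). (i, ?off i + 1 + int j)"
  let ?S = "Sigma {..<length \<alpha>} (\<lambda>i. {j. j < \<alpha>!i \<and> W!i!j = k})"
  have inj: "inj_on ?f ?S"
  proof (rule inj_onI)
    fix p q assume "?f p = ?f q"
    thus "p = q" by (cases p; cases q) simp
  qed
  have img: "?f ` ?S = {b \<in> overlap_diagram \<alpha> \<beta>. T b = k}"
  proof
    show "?f ` ?S \<subseteq> {b \<in> overlap_diagram \<alpha> \<beta>. T b = k}"
      using assms(3) by (auto simp: mem_D)
  next
    show "{b \<in> overlap_diagram \<alpha> \<beta>. T b = k} \<subseteq> ?f ` ?S"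
    proof
      fix b assume b: "b \<in> {b \<in> overlap_diagram \<alpha> \<beta>. T b = k}"
      obtain i j where bij: "b = (i,j)" by (cases b)
      with b have i: "i < length \<alpha>" and j1: "?off i < j" and j2: "j \<le> ?off i + int (\<alpha>!i)" and Tk: "T (i,j) = k"
        by (auto simp: mem_D)
      define a where "a = nat (j - ?off i - 1)"
      have ja: "j = ?off i + 1 + int a" using j1 unfolding a_def by simp
      have a: "a < \<alpha>!i" using j1 j2 unfolding a_def by linarith
      have "W!i!a = k" using assms(3)[OF i a] ja Tk by simp
      hence "(i,a) \<in> ?S" using i a by simp
      thus "b \<in> ?f ` ?S" using bij ja by (auto intro!: image_eqI[where x="(i,a)"])
    qed
  qed
  have "card {b \<in> overlap_diagram \<alpha> \<beta>. T b = k} = card ?S"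
    using card_image[OF inj] img by simp
  also have "\<dots> = (\<Sum>i<length \<alpha>. card {j. j < \<alpha>!i \<and> W!i!j = k})"
    by (rule card_SigmaI) auto
  also have "\<dots> = (\<Sum>i<length W. count (mset (W!i)) k)"
    using assms(1,2) by (auto simp: count_card intro!: sum.cong)
  also have "\<dots> = count (mset (concat W)) k" by (simp add: count_concat_sum)
  finally show ?thesis .
qed

lemma from_words_at:
  assumes "i < length \<alpha>" "j < \<alpha>!i"
  shows "from_words \<alpha> \<beta> W (i, row_off \<alpha> \<beta> i + 1 + int j) = W!i!j"
  using assms by (simp add: from_words_def mem_D)

lemma col_adj:
  assumes v: "overlap_valid \<alpha> \<beta>" and R: "rowsOK \<alpha> \<beta> W"
    and d1: "(i,j) \<in> overlap_diagram \<alpha> \<beta>" and d2: "(Suc i, j) \<in> overlap_diagram \<alpha> \<beta>"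
  shows "from_words \<alpha> \<beta> W (i,j) < from_words \<alpha> \<beta> W (Suc i, j)"
proof -
  let ?off = "row_off \<alpha> \<beta>"
  from d1 d2 have i: "Suc i < length \<alpha>" and j1: "?off i < j" and j2: "j \<le> ?off (Suc i) + int (\<alpha>!Suc i)"
    and j3: "?off (Suc i) < j"
    by (auto simp: mem_D)
  note st = off_step[OF v i]
  define a where "a = nat (j - ?off i - 1)"
  have ja: "j = ?off i + 1 + int a" using j1 unfolding a_def by simp
  have a: "a < \<beta>!i" using j1 j2 st unfolding a_def by linarith
  have ilb: "i < length \<beta>" using v i unfolding overlap_valid_def by simp
  have lenS: "length (W!Suc i) = \<alpha>!Suc i" using R i unfolding rowsOK_def rowOK_def by simp
  have "W!i!a < W!Suc i!(length (W!Suc i) - \<beta>!i + a)"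
    using R ilb a unfolding rowsOK_def adj_def by blast
  moreover have "from_words \<alpha> \<beta> W (i,j) = W!i!a"
    using d1 ja by (simp add: from_words_def)
  moreover have "nat (j - ?off (Suc i) - 1) = \<alpha>!Suc i - \<beta>!i + a"
    using ja st by simp
  hence "from_words \<alpha> \<beta> W (Suc i,j) = W!Suc i!(\<alpha>!Suc i - \<beta>!i + a)"
    using d2 by (simp add: from_words_def)
  ultimately show ?thesis using lenS by simp
qed

lemma col_chain:
  assumes v: "overlap_valid \<alpha> \<beta>" and R: "rowsOK \<alpha> \<beta> W"
  shows "(i,j) \<in> overlap_diagram \<alpha> \<beta> \<Longrightarrow> (i + Suc d, j) \<in> overlap_diagram \<alpha> \<beta> \<Longrightarrow>
     from_words \<alpha> \<beta> W (i,j) < from_words \<alpha> \<beta> W (i + Suc d, j)"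
proof (induction d)
  case 0 thus ?case using col_adj[OF v R] by simp
next
  case (Suc d)
  let ?off = "row_off \<alpha> \<beta>"
  have l: "i + Suc (Suc d) < length \<alpha>" using Suc.prems by (simp add: mem_D)
  have m1: "?off (i + Suc d) \<le> ?off i" using off_mono[OF v, of i "i + Suc d"] l by simp
  have m2: "?off (i + Suc (Suc d)) + int (\<alpha>!(i + Suc (Suc d))) \<le> ?off (i + Suc d) + int (\<alpha>!(i + Suc d))"
    using off_mono[OF v, of "i + Suc d" "i + Suc (Suc d)"] l by simp
  have mid: "(i + Suc d, j) \<in> overlap_diagram \<alpha> \<beta>"
    using Suc.prems m1 m2 l by (simp add: mem_D)
  have "from_words \<alpha> \<beta> W (i,j) < from_words \<alpha> \<beta> W (i + Suc d, j)"
    using Suc.IH Suc.prems(1) mid by simp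
  also have "\<dots> < from_words \<alpha> \<beta> W (Suc (i + Suc d), j)"
    using col_adj[OF v R mid] Suc.prems(2) by simp
  finally show ?case by simp
qed

lemma ssyt_from:
  assumes v: "overlap_valid \<alpha> \<beta>" and R: "rowsOK \<alpha> \<beta> W"
  shows "is_ssyt (overlap_diagram \<alpha> \<beta>) (from_words \<alpha> \<beta> W)"
proof -
  let ?D = "overlap_diagram \<alpha> \<beta>" and ?T = "from_words \<alpha> \<beta> W" and ?off = "row_off \<alpha> \<beta>"
  have pos: "\<forall>b\<in>?D. 1 \<le> ?T b"
  proof
    fix b assume b: "b \<in> ?D"
    obtain i j where bij: "b = (i,j)" by (cases b)
    with b have i: "i < length \<alpha>" and "?off i < j" "j \<le> ?off i + int (\<alpha>!i)" by (auto simp: mem_D)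
    hence a: "nat (j - ?off i - 1) < length (W!i)" using R unfolding rowsOK_def rowOK_def by auto
    have "1 \<le> W!i!nat (j - ?off i - 1)"
      using R i nth_mem[OF a] unfolding rowsOK_def rowOK_def by blast
    thus "1 \<le> ?T b" using b bij by (simp add: from_words_def)
  qed
  have zero: "\<forall>b. b \<notin> ?D \<longrightarrow> ?T b = 0" by (auto simp: from_words_def)
  have row: "\<forall>i j j'. (i, j) \<in> ?D \<longrightarrow> (i, j') \<in> ?D \<longrightarrow> j \<le> j' \<longrightarrow> ?T (i, j) \<le> ?T (i, j')"
  proof (intro allI impI)
    fix i j j' assume d: "(i,j) \<in> ?D" "(i,j') \<in> ?D" "j \<le> j'"
    hence i: "i < length \<alpha>" and b: "?off i < j" "j' \<le> ?off i + int (\<alpha>!i)" by (auto simp: mem_D)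
    have s: "sorted (W!i)" and l: "length (W!i) = \<alpha>!i" using R i unfolding rowsOK_def rowOK_def by auto
    have "W!i!nat (j - ?off i - 1) \<le> W!i!nat (j' - ?off i - 1)"
      by (rule sorted_nth_mono[OF s]) (use b d(3) l in linarith)+
    thus "?T (i, j) \<le> ?T (i, j')" using d by (simp add: from_words_def)
  qed
  have col: "\<forall>i i' j. (i, j) \<in> ?D \<longrightarrow> (i', j) \<in> ?D \<longrightarrow> i < i' \<longrightarrow> ?T (i, j) < ?T (i', j)"
  proof (intro allI impI)
    fix i i' j assume d: "(i,j) \<in> ?D" "(i',j) \<in> ?D" "i < i'"
    obtain d' where "i' = i + Suc d'" using less_imp_Suc_add[OF d(3)] by auto
    thus "?T (i, j) < ?T (i', j)" using col_chain[OF v R] d by simp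
  qed
  show ?thesis unfolding is_ssyt_def using pos zero row col by blast
qed

lemma rowsOK_parts:
  assumes "rowsOK \<alpha> \<beta> W"
  shows "length W = length \<alpha>" "\<And>i. i < length \<alpha> \<Longrightarrow> length (W!i) = \<alpha>!i"
    "\<And>i. i < length \<alpha> \<Longrightarrow> sorted (W!i)"
  using assms unfolding rowsOK_def rowOK_def by auto

lemma ssyt_parts:
  assumes "is_ssyt D T"
  shows "\<And>b. b \<in> D \<Longrightarrow> 1 \<le> T b" "\<And>b. b \<notin> D \<Longrightarrow> T b = 0"
    "\<And>i j j'. (i, j) \<in> D \<Longrightarrow> (i, j') \<in> D \<Longrightarrow> j \<le> j' \<Longrightarrow> T (i, j) \<le> T (i, j')"
    "\<And>i i' j. (i, j) \<in> D \<Longrightarrow> (i', j) \<in> D \<Longrightarrow> i < i' \<Longrightarrow> T (i, j) < T (i', j)"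
  using assms unfolding is_ssyt_def by blast+

lemma to_words_nth:
  assumes "i < length \<alpha>" "j < \<alpha>!i"
  shows "to_words \<alpha> \<beta> T ! i ! j = T (i, row_off \<alpha> \<beta> i + 1 + int j)"
  using assms by (simp add: to_words_def)

lemma to_words_len: "length (to_words \<alpha> \<beta> T) = length \<alpha>"
  "i < length \<alpha> \<Longrightarrow> length (to_words \<alpha> \<beta> T ! i) = \<alpha>!i"
  by (simp_all add: to_words_def)

lemma rows_to:
  assumes v: "overlap_valid \<alpha> \<beta>" and S: "is_ssyt (overlap_diagram \<alpha> \<beta>) T"
  shows "rowsOK \<alpha> \<beta> (to_words \<alpha> \<beta> T)"
proof -
  let ?W = "to_words \<alpha> \<beta> T" and ?off = "row_off \<alpha> \<beta>" and ?D = "overlap_diagram \<alpha> \<beta>"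
  note sp = ssyt_parts[OF S]
  have r: "rowOK (\<alpha>!i) (?W!i)" if i: "i < length \<alpha>" for i
  proof -
    have "sorted (?W!i)"
    proof (rule sorted_iff_nth_mono[THEN iffD2], intro allI impI)
      fix j j' assume jj: "j \<le> j'" "j' < length (?W!i)"
      hence "j' < \<alpha>!i" using to_words_len(2)[OF i] by simp
      hence "(i, ?off i + 1 + int j) \<in> ?D" "(i, ?off i + 1 + int j') \<in> ?D" using jj i by (auto simp: mem_D)
      from sp(3)[OF this] jj(1) have "T (i, ?off i + 1 + int j) \<le> T (i, ?off i + 1 + int j')" by simp
      thus "?W!i!j \<le> ?W!i!j'" using to_words_nth[OF i] jj \<open>j' < \<alpha>!i\<close> by simp
    qed
    moreover have "\<forall>v\<in>set (?W!i). 1 \<le> v"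
    proof
      fix v assume "v \<in> set (?W!i)"
      then obtain j where j: "j < \<alpha>!i" "v = ?W!i!j" using to_words_len(2)[OF i] by (auto simp: in_set_conv_nth)
      hence "(i, ?off i + 1 + int j) \<in> ?D" using i by (auto simp: mem_D)
      thus "1 \<le> v" using sp(1) j to_words_nth[OF i j(1)] by simp
    qed
    ultimately show ?thesis using to_words_len(2)[OF i] unfolding rowOK_def by simp
  qed
  have a: "adj (\<beta>!i) (?W!i) (?W!Suc i)" if i: "i < length \<beta>" for i
    unfolding adj_def
  proof (intro allI impI)
    fix a assume a: "a < \<beta>!i"
    have si: "Suc i < length \<alpha>" using v i unfolding overlap_valid_def by simp
    note st = off_step[OF v si]
    have ai: "a < \<alpha>!i" and a2: "\<alpha>!Suc i - \<beta>!i + a < \<alpha>!Suc i" using a st by auto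
    have eq: "?off (Suc i) + 1 + int (\<alpha>!Suc i - \<beta>!i + a) = ?off i + 1 + int a" using st by simp
    have d1: "(i, ?off i + 1 + int a) \<in> ?D" using ai si by (auto simp: mem_D)
    have d2': "(Suc i, ?off (Suc i) + 1 + int (\<alpha>!Suc i - \<beta>!i + a)) \<in> ?D" using a2 si by (auto simp: mem_D)
    have d2: "(Suc i, ?off i + 1 + int a) \<in> ?D" using d2' unfolding eq .
    have "T (i, ?off i + 1 + int a) < T (Suc i, ?off i + 1 + int a)" using sp(4)[OF d1 d2] by simp
    moreover have "?W!i!a = T (i, ?off i + 1 + int a)" using to_words_nth[OF _ ai] si by simp
    moreover have "?W!Suc i!(\<alpha>!Suc i - \<beta>!i + a) = T (Suc i, ?off i + 1 + int a)"
      using to_words_nth[OF si a2, of \<beta> T] unfolding eq .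
    ultimately show "?W!i!a < ?W!Suc i!(length (?W!Suc i) - \<beta>!i + a)" using to_words_len(2)[OF si] by simp
  qed
  show ?thesis unfolding rowsOK_def using r a to_words_len(1) by blast
qed

lemma from_to:
  assumes S: "is_ssyt (overlap_diagram \<alpha> \<beta>) T"
  shows "from_words \<alpha> \<beta> (to_words \<alpha> \<beta> T) = T"
proof
  fix b :: "nat \<times> int"
  obtain i j where b: "b = (i,j)" by (cases b)
  show "from_words \<alpha> \<beta> (to_words \<alpha> \<beta> T) b = T b"
  proof (cases "b \<in> overlap_diagram \<alpha> \<beta>")
    case True
    hence i: "i < length \<alpha>" and j: "row_off \<alpha> \<beta> i < j" "j \<le> row_off \<alpha> \<beta> i + int (\<alpha>!i)" using b by (auto simp: mem_D)
    have n: "nat (j - row_off \<alpha> \<beta> i - 1) < \<alpha>!i" using j by linarith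
    have e: "row_off \<alpha> \<beta> i + 1 + int (nat (j - row_off \<alpha> \<beta> i - 1)) = j" using j by linarith
    show ?thesis using True b to_words_nth[OF i n] e by (simp add: from_words_def)
  next
    case False thus ?thesis using ssyt_parts(2)[OF S] b by (simp add: from_words_def)
  qed
qed

lemma to_from:
  assumes R: "rowsOK \<alpha> \<beta> W"
  shows "to_words \<alpha> \<beta> (from_words \<alpha> \<beta> W) = W"
proof (rule nth_equalityI)
  show "length (to_words \<alpha> \<beta> (from_words \<alpha> \<beta> W)) = length W" using rowsOK_parts(1)[OF R] to_words_len(1) by simp
next
  fix i assume "i < length (to_words \<alpha> \<beta> (from_words \<alpha> \<beta> W))"
  hence i: "i < length \<alpha>" using to_words_len(1) by simp
  show "to_words \<alpha> \<beta> (from_words \<alpha> \<beta> W) ! i = W ! i"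
  proof (rule nth_equalityI)
    show "length (to_words \<alpha> \<beta> (from_words \<alpha> \<beta> W) ! i) = length (W!i)"
      using to_words_len(2)[OF i] rowsOK_parts(2)[OF R i] by simp
  next
    fix j assume "j < length (to_words \<alpha> \<beta> (from_words \<alpha> \<beta> W) ! i)"
    hence j: "j < \<alpha>!i" using to_words_len(2)[OF i] by simp
    show "to_words \<alpha> \<beta> (from_words \<alpha> \<beta> W) ! i ! j = W ! i ! j"
      using to_words_nth[OF i j] from_words_at[OF i j] by simp
  qed
qed

lemma skew_schur_words:
  assumes v: "overlap_valid \<alpha> \<beta>"
  shows "skew_schur \<alpha> \<beta> c = int (card {W. rowsOK \<alpha> \<beta> W \<and> wcont W = c})"
proof -
  let ?D = "overlap_diagram \<alpha> \<beta>"
  let ?ST = "{T. is_ssyt ?D T \<and> (\<forall>k. card {b \<in> ?D. T b = k} = c k)}"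
  let ?SW = "{W. rowsOK \<alpha> \<beta> W \<and> wcont W = c}"
  have cT: "card {b \<in> ?D. T b = k} = wcont (to_words \<alpha> \<beta> T) k" for T k
    unfolding wcont_def by (rule content_eq) (simp_all add: to_words_len to_words_nth)
  have cW: "card {b \<in> ?D. from_words \<alpha> \<beta> W b = k} = wcont W k" if R: "rowsOK \<alpha> \<beta> W" for W k
    unfolding wcont_def by (rule content_eq) (simp_all add: rowsOK_parts[OF R] from_words_at)
  have "bij_betw (to_words \<alpha> \<beta>) ?ST ?SW"
  proof (rule bij_betw_byWitness[where f'="from_words \<alpha> \<beta>"])
    show "\<forall>T\<in>?ST. from_words \<alpha> \<beta> (to_words \<alpha> \<beta> T) = T" using from_to by blast
    show "\<forall>W\<in>?SW. to_words \<alpha> \<beta> (from_words \<alpha> \<beta> W) = W" using to_from by blast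
    show "to_words \<alpha> \<beta> ` ?ST \<subseteq> ?SW"
    proof
      fix W assume "W \<in> to_words \<alpha> \<beta> ` ?ST"
      then obtain T where T: "T \<in> ?ST" "W = to_words \<alpha> \<beta> T" by blast
      have "wcont W = c" using T cT by auto
      thus "W \<in> ?SW" using T rows_to[OF v] by blast
    qed
    show "from_words \<alpha> \<beta> ` ?SW \<subseteq> ?ST"
    proof
      fix T assume "T \<in> from_words \<alpha> \<beta> ` ?SW"
      then obtain W where W: "W \<in> ?SW" "T = from_words \<alpha> \<beta> W" by blast
      have "\<forall>k. card {b \<in> ?D. T b = k} = c k" using W cW by auto
      thus "T \<in> ?ST" using W ssyt_from[OF v] by blast
    qed
  qed
  hence "card ?ST = card ?SW" by (rule bij_betw_same_card)
  thus ?thesis unfolding skew_schur_def using v by simp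
qed

definition cle :: "nat list \<Rightarrow> nat \<Rightarrow> nat" where
  "cle z h = size (filter_mset (\<lambda>a. a \<le> h) (mset z))"
definition clt :: "nat list \<Rightarrow> nat \<Rightarrow> nat" where
  "clt w h = size (filter_mset (\<lambda>a. a < h) (mset w))"

lemma size_filter_card: "size (filter_mset P (mset xs)) = card {l. l < length xs \<and> P (xs!l)}"
  by (simp flip: mset_filter add: length_filter_conv_card)

lemma adj_count:
  assumes su: "sorted u" and sv: "sorted v" and bu: "b \<le> length u" and bv: "b \<le> length v"
  shows "adj b u v \<longleftrightarrow> (\<forall>h. cle v h \<le> clt u h + (length v - b))"
proof
  assume A: "adj b u v"
  show "\<forall>h. cle v h \<le> clt u h + (length v - b)"
  proof
    fix h
    let ?n = "length v"
    have sub: "{l. l < ?n \<and> v!l \<le> h} \<subseteq> {..<?n - b} \<union> (\<lambda>j. ?n - b + j) ` {j. j < length u \<and> u!j < h}"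
    proof
      fix l assume l: "l \<in> {l. l < ?n \<and> v!l \<le> h}"
      show "l \<in> {..<?n - b} \<union> (\<lambda>j. ?n - b + j) ` {j. j < length u \<and> u!j < h}"
      proof (cases "l < ?n - b")
        case True thus ?thesis by simp
      next
        case False
        define j where "j = l - (?n - b)"
        have lj: "l = ?n - b + j" "j < b" using False l bv unfolding j_def by auto
        have "u!j < v!(?n - b + j)" using A lj(2) unfolding adj_def by blast
        hence "u!j < h" using l lj(1) by simp
        thus ?thesis using lj bu by auto
      qed
    qed
    have "cle v h = card {l. l < ?n \<and> v!l \<le> h}" unfolding cle_def size_filter_card ..
    also have "\<dots> \<le> card ({..<?n - b} \<union> (\<lambda>j. ?n - b + j) ` {j. j < length u \<and> u!j < h})"
      by (rule card_mono[OF _ sub]) simp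
    also have "\<dots> \<le> card {..<?n - b} + card ((\<lambda>j. ?n - b + j) ` {j. j < length u \<and> u!j < h})"
      by (rule card_Un_le)
    also have "\<dots> \<le> (?n - b) + card {j. j < length u \<and> u!j < h}"
      using card_image_le[of "{j. j < length u \<and> u!j < h}" "\<lambda>j. ?n - b + j"] by simp
    also have "card {j. j < length u \<and> u!j < h} = clt u h" unfolding clt_def size_filter_card ..
    finally show "cle v h \<le> clt u h + (?n - b)" by simp
  qed
next
  assume C: "\<forall>h. cle v h \<le> clt u h + (length v - b)"
  show "adj b u v" unfolding adj_def
  proof (intro allI impI, rule ccontr)
    fix j assume j: "j < b" and n: "\<not> u!j < v!(length v - b + j)"
    let ?n = "length v"
    define h0 where "h0 = v!(?n - b + j)"
    have "{..?n - b + j} \<subseteq> {l. l < ?n \<and> v!l \<le> h0}"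
    proof
      fix l assume "l \<in> {..?n - b + j}"
      hence "l \<le> ?n - b + j" by simp
      moreover have "?n - b + j < ?n" using j bv by simp
      ultimately show "l \<in> {l. l < ?n \<and> v!l \<le> h0}" using sorted_nth_mono[OF sv] unfolding h0_def by auto
    qed
    hence c1: "Suc (?n - b + j) \<le> cle v h0" unfolding cle_def size_filter_card
      using card_mono[of "{l. l < ?n \<and> v!l \<le> h0}" "{..?n - b + j}"] by simp
    have "{l. l < length u \<and> u!l < h0} \<subseteq> {..<j}"
    proof
      fix l assume l: "l \<in> {l. l < length u \<and> u!l < h0}"
      show "l \<in> {..<j}"
      proof (rule ccontr)
        assume "l \<notin> {..<j}"
        hence "j \<le> l" by simp
        hence "u!j \<le> u!l" using sorted_nth_mono[OF su] l by simp
        thus False using n l unfolding h0_def by simp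
      qed
    qed
    hence c2: "clt u h0 \<le> j" unfolding clt_def size_filter_card
      using card_mono[of "{..<j}"] by fastforce
    show False using C[rule_format, of h0] c1 c2 by simp
  qed
qed

definition F :: "nat list \<Rightarrow> nat list \<Rightarrow> nat \<Rightarrow> int" where
  "F w z h = int (cle z h) - int (clt w h)"

definition ind :: "bool \<Rightarrow> int" where "ind b = (if b then 1 else 0)"

lemma size_filter_remove:
  assumes "v \<in># M"
  shows "int (size (filter_mset P (M - {#v#}))) = int (size (filter_mset P M)) - ind (P v)"
proof -
  have "M = add_mset v (M - {#v#})" using assms by simp
  hence "size (filter_mset P M) = size (filter_mset P (add_mset v (M - {#v#})))" by simp
  also have "\<dots> = size (filter_mset P (M - {#v#})) + (if P v then 1 else 0)" by simp
  finally show ?thesis by (simp add: ind_def)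
qed

lemma cle_remove1: assumes "v \<in> set z" shows "int (cle (remove1 v z) h) = int (cle z h) - ind (v \<le> h)"
  unfolding cle_def mset_remove1 by (rule size_filter_remove) (use assms in simp)
lemma clt_remove1: assumes "v \<in> set z" shows "int (clt (remove1 v z) h) = int (clt z h) - ind (v < h)"
  unfolding clt_def mset_remove1 by (rule size_filter_remove) (use assms in simp)
lemma cle_insort: "int (cle (insort v z) h) = int (cle z h) + ind (v \<le> h)"
  unfolding cle_def by (simp add: ind_def)
lemma clt_insort: "int (clt (insort v z) h) = int (clt z h) + ind (v < h)"
  unfolding clt_def by (simp add: ind_def)

lemma F_fwd: "v \<in> set z \<Longrightarrow> F (insort v w) (remove1 v z) h = F w z h - ind (v \<le> h) - ind (v < h)"
  unfolding F_def by (simp add: cle_remove1 clt_insort)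
lemma F_bwd: "v \<in> set w \<Longrightarrow> F (remove1 v w) (insort v z) h = F w z h + ind (v \<le> h) + ind (v < h)"
  unfolding F_def by (simp add: clt_remove1 cle_insort)

lemma size_le_Suc: "size (filter_mset (\<lambda>a. a \<le> Suc h) M) = size (filter_mset (\<lambda>a. a \<le> h) M) + count M (Suc h)"
  by (induction M) auto
lemma size_lt_Suc: "size (filter_mset (\<lambda>a. a < Suc h) M) = size (filter_mset (\<lambda>a. a < h) M) + count M h"
  by (induction M) auto

lemma F_Suc: "F w z (Suc h) = F w z h + int (count (mset z) (Suc h)) - int (count (mset w) h)"
  unfolding F_def cle_def clt_def by (simp add: size_le_Suc size_lt_Suc)

lemma F0: "\<forall>a\<in>set z. 1 \<le> a \<Longrightarrow> F w z 0 = 0"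
proof -
  assume "\<forall>a\<in>set z. 1 \<le> a"
  hence "filter_mset (\<lambda>a. a \<le> 0) (mset z) = {#}" by (induction z) auto
  thus ?thesis unfolding F_def cle_def clt_def by simp
qed

lemma F_big:
  assumes "\<forall>a\<in>set w \<union> set z. a < K" "K \<le> h"
  shows "F w z h = int (length z) - int (length w)"
proof -
  have "\<forall>a\<in>set z. a < K" using assms(1) by blast
  hence "filter_mset (\<lambda>a. a \<le> h) (mset z) = mset z" using assms(2) by (induction z) auto
  moreover have "\<forall>a\<in>set w. a < K" using assms(1) by blast
  hence "filter_mset (\<lambda>a. a < h) (mset w) = mset w" using assms(2) by (induction w) auto
  ultimately show ?thesis unfolding F_def cle_def clt_def by simp
qed

definition bnd :: "nat list \<Rightarrow> nat list \<Rightarrow> nat" where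
  "bnd w z = Suc (Max (insert 0 (set (w @ z))))"

lemma bnd: "\<forall>a\<in>set w \<union> set z. a < bnd w z"
  unfolding bnd_def by (auto simp: le_imp_less_Suc)

lemma ex_max: "\<exists>h0. \<forall>h. F w z h \<le> F w z h0"
proof -
  let ?K = "bnd w z"
  have "Max (F w z ` {..?K}) \<in> F w z ` {..?K}" by (rule Max_in) auto
  then obtain h0 where h0': "h0 \<in> {..?K}" "Max (F w z ` {..?K}) = F w z h0" by (rule imageE)
  hence h0: "h0 \<in> {..?K}" "F w z h0 = Max (F w z ` {..?K})" by simp_all
  have "F w z h \<le> F w z h0" for h
  proof (cases "h \<le> ?K")
    case True thus ?thesis using h0 Max_ge[of "F w z ` {..?K}" "F w z h"] by simp
  next
    case False
    hence "F w z h = F w z ?K" using F_big[OF bnd] by simp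
    thus ?thesis using h0 by simp
  qed
  thus ?thesis by blast
qed

definition fmax :: "nat list \<Rightarrow> nat list \<Rightarrow> nat" where
  "fmax w z = (LEAST h. \<forall>h'. F w z h' \<le> F w z h)"
definition lmax :: "nat list \<Rightarrow> nat list \<Rightarrow> nat" where
  "lmax w z = (GREATEST h. \<forall>h'. F w z h' \<le> F w z h)"

lemma fmax_max: "F w z h \<le> F w z (fmax w z)"
  using LeastI_ex[OF ex_max[of w z]] unfolding fmax_def by blast

lemma fmax_less: "h < fmax w z \<Longrightarrow> F w z h < F w z (fmax w z)"
proof -
  assume "h < fmax w z"
  hence "\<not> (\<forall>h'. F w z h' \<le> F w z h)" unfolding fmax_def by (rule not_less_Least)
  hence "\<exists>h'. F w z h < F w z h'" by (simp add: not_le)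
  then obtain h' where "F w z h < F w z h'" by blast
  thus ?thesis using fmax_max[of w z h'] by simp
qed

lemma fmax_unique:
  assumes "\<forall>h. F w z h \<le> F w z v" "\<forall>h<v. F w z h < F w z v"
  shows "fmax w z = v"
proof -
  have "F w z (fmax w z) = F w z v" using fmax_max[of w z v] assms(1) by (simp add: order_antisym)
  show ?thesis
  proof (rule ccontr)
    assume "fmax w z \<noteq> v"
    hence "fmax w z < v \<or> v < fmax w z" by auto
    thus False using assms(2) fmax_less[of v w z] \<open>F w z (fmax w z) = F w z v\<close> by auto
  qed
qed

context
  fixes w z :: "nat list"
  assumes pos: "\<forall>a\<in>set z. 1 \<le> a" and len: "length z < length w"
begin

lemma max_bound: "\<forall>h'. F w z h' \<le> F w z h \<Longrightarrow> h < bnd w z"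
proof (rule ccontr)
  assume a: "\<forall>h'. F w z h' \<le> F w z h" and "\<not> h < bnd w z"
  hence "F w z h = int (length z) - int (length w)" using F_big[OF bnd] by simp
  moreover have "F w z 0 \<le> F w z h" using a by blast
  ultimately show False using F0[OF pos] len by simp
qed

lemma lmax_max: "F w z h \<le> F w z (lmax w z)"
proof -
  obtain h0 where "\<forall>h. F w z h \<le> F w z h0" using ex_max by blast
  hence "\<forall>h'. F w z h' \<le> F w z (lmax w z)" unfolding lmax_def
    by (rule GreatestI_nat[where b="bnd w z"]) (meson max_bound less_imp_le)
  thus ?thesis by blast
qed

lemma lmax_less: "lmax w z < h \<Longrightarrow> F w z h < F w z (lmax w z)"
proof (rule ccontr)
  assume h: "lmax w z < h" and "\<not> F w z h < F w z (lmax w z)"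
  hence "\<forall>h'. F w z h' \<le> F w z h" using lmax_max by (meson not_less order_trans)
  hence "h \<le> lmax w z" unfolding lmax_def
    by (rule Greatest_le_nat[where b="bnd w z"]) (meson max_bound less_imp_le)
  thus False using h by simp
qed

lemma lmax_unique:
  assumes "\<forall>h. F w z h \<le> F w z v" "\<forall>h>v. F w z h < F w z v"
  shows "lmax w z = v"
proof -
  have e: "F w z (lmax w z) = F w z v" using lmax_max[of v] assms(1) by (simp add: order_antisym)
  show ?thesis
  proof (rule ccontr)
    assume "lmax w z \<noteq> v"
    hence "lmax w z < v \<or> v < lmax w z" by auto
    thus False using assms(2) lmax_less[of v] e by auto
  qed
qed

lemma lmax_mem: "lmax w z \<in> set w"
proof -
  have "F w z (Suc (lmax w z)) < F w z (lmax w z)" by (rule lmax_less) simp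
  hence "count (mset z) (Suc (lmax w z)) < count (mset w) (lmax w z)" using F_Suc[of w z "lmax w z"] by simp
  hence "0 < count (mset w) (lmax w z)" by linarith
  hence "lmax w z \<in># mset w" by (simp only: count_greater_zero_iff)
  thus ?thesis by simp
qed

lemma lmax_nonneg: "0 \<le> F w z (lmax w z)"
  using lmax_max[of 0] F0[OF pos] by simp

end

lemma fmax_mem:
  assumes pos: "\<forall>a\<in>set z. 1 \<le> a" and M: "0 < F w z (fmax w z)"
  shows "fmax w z \<in> set z"
proof -
  have "fmax w z \<noteq> 0" using M F0[OF pos, of w] by (cases "fmax w z") auto
  then obtain p where p: "fmax w z = Suc p" by (cases "fmax w z") auto
  have "F w z p < F w z (Suc p)" using fmax_less[of p w z] p by simp
  hence "count (mset w) p < count (mset z) (Suc p)" using F_Suc[of w z p] by simp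
  hence "0 < count (mset z) (Suc p)" by linarith
  hence "Suc p \<in># mset z" by (simp only: count_greater_zero_iff)
  thus ?thesis using p by simp
qed

definition fwd :: "nat list \<times> nat list \<Rightarrow> nat list \<times> nat list" where
  "fwd p = (let v = fmax (fst p) (snd p) in (insort v (fst p), remove1 v (snd p)))"
definition bwd :: "nat list \<times> nat list \<Rightarrow> nat list \<times> nat list" where
  "bwd p = (let v = lmax (fst p) (snd p) in (remove1 v (fst p), insort v (snd p)))"

lemma ind_simps[simp]: "ind True = 1" "ind False = 0" by (simp_all add: ind_def)

lemma fwd_props:
  assumes pos: "\<forall>a\<in>set z. 1 \<le> a" and M: "0 < F w z (fmax w z)" and len: "length z \<le> Suc (length w)"
  defines "v \<equiv> fmax w z"
  shows "\<forall>h. F (fst (fwd (w,z))) (snd (fwd (w,z))) h \<le> F w z v - 1"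
    and "F (fst (fwd (w,z))) (snd (fwd (w,z))) v = F w z v - 1"
    and "lmax (fst (fwd (w,z))) (snd (fwd (w,z))) = v"
    and "v \<in> set z"
proof -
  have vz: "v \<in> set z" unfolding v_def by (rule fmax_mem[OF pos M])
  show "v \<in> set z" by (fact vz)
  have fw: "fwd (w,z) = (insort v w, remove1 v z)" unfolding fwd_def v_def Let_def by simp
  have Fe: "F (insort v w) (remove1 v z) h = F w z h - ind (v \<le> h) - ind (v < h)" for h
    by (rule F_fwd[OF vz])
  have le: "F (insort v w) (remove1 v z) h \<le> F w z v - 1" for h
  proof (cases "h < v")
    case True thus ?thesis using Fe[of h] fmax_less[of h w z] unfolding v_def by (simp add: ind_def)
  next
    case False thus ?thesis using Fe[of h] fmax_max[of w z h] unfolding v_def by (auto simp: ind_def)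
  qed
  have gt: "F (insort v w) (remove1 v z) h < F (insort v w) (remove1 v z) v" if "v < h" for h
    using Fe[of h] Fe[of v] fmax_max[of w z h] that unfolding v_def by (simp add: ind_def)
  have eqv: "F (insort v w) (remove1 v z) v = F w z v - 1" using Fe[of v] by simp
  show "\<forall>h. F (fst (fwd (w,z))) (snd (fwd (w,z))) h \<le> F w z v - 1" using le fw by simp
  show "F (fst (fwd (w,z))) (snd (fwd (w,z))) v = F w z v - 1" using eqv fw by simp
  have pos': "\<forall>a\<in>set (remove1 v z). 1 \<le> a" using pos by (meson notin_set_remove1)
  have len': "length (remove1 v z) < length (insort v w)" using len vz by (simp add: length_remove1)
  have "lmax (insort v w) (remove1 v z) = v"
    by (rule lmax_unique[OF pos' len']) (use le eqv gt in auto)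
  thus "lmax (fst (fwd (w,z))) (snd (fwd (w,z))) = v" using fw by simp
qed

lemma bwd_props:
  assumes pos: "\<forall>a\<in>set z. 1 \<le> a" and len: "length z < length w"
  defines "v \<equiv> lmax w z"
  shows "\<forall>h. F (fst (bwd (w,z))) (snd (bwd (w,z))) h \<le> F w z v + 1"
    and "F (fst (bwd (w,z))) (snd (bwd (w,z))) v = F w z v + 1"
    and "fmax (fst (bwd (w,z))) (snd (bwd (w,z))) = v"
    and "v \<in> set w"
proof -
  have vw: "v \<in> set w" unfolding v_def by (rule lmax_mem[OF pos len])
  show "v \<in> set w" by (fact vw)
  have bw: "bwd (w,z) = (remove1 v w, insort v z)" unfolding bwd_def v_def Let_def by simp
  have Fe: "F (remove1 v w) (insort v z) h = F w z h + ind (v \<le> h) + ind (v < h)" for h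
    by (rule F_bwd[OF vw])
  have le: "F (remove1 v w) (insort v z) h \<le> F w z v + 1" for h
  proof (cases "v < h")
    case True thus ?thesis using Fe[of h] lmax_less[OF pos len, of h] unfolding v_def by (simp add: ind_def)
  next
    case False thus ?thesis using Fe[of h] lmax_max[OF pos len, of h] unfolding v_def by (auto simp: ind_def)
  qed
  have lt: "F (remove1 v w) (insort v z) h < F (remove1 v w) (insort v z) v" if "h < v" for h
    using Fe[of h] Fe[of v] lmax_max[OF pos len, of h] that unfolding v_def by (simp add: ind_def)
  have eqv: "F (remove1 v w) (insort v z) v = F w z v + 1" using Fe[of v] by simp
  show "\<forall>h. F (fst (bwd (w,z))) (snd (bwd (w,z))) h \<le> F w z v + 1" using le bw by simp
  show "F (fst (bwd (w,z))) (snd (bwd (w,z))) v = F w z v + 1" using eqv bw by simp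
  have "fmax (remove1 v w) (insort v z) = v"
    by (rule fmax_unique) (use le eqv lt in auto)
  thus "fmax (fst (bwd (w,z))) (snd (bwd (w,z))) = v" using bw by simp
qed

lemma bwd_fwd:
  assumes pos: "\<forall>a\<in>set z. 1 \<le> a" and M: "0 < F w z (fmax w z)" and len: "length z \<le> Suc (length w)"
    and sz: "sorted z"
  shows "bwd (fwd (w,z)) = (w,z)"
proof -
  let ?v = "fmax w z"
  have fw: "fwd (w,z) = (insort ?v w, remove1 ?v z)" unfolding fwd_def Let_def by simp
  have "lmax (insort ?v w) (remove1 ?v z) = ?v" using fwd_props(3)[OF pos M len] fw by simp
  hence "bwd (fwd (w,z)) = (remove1 ?v (insort ?v w), insort ?v (remove1 ?v z))"
    unfolding bwd_def fw Let_def by simp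
  thus ?thesis using insort_remove1[OF fwd_props(4)[OF pos M len] sz] by simp
qed

lemma fwd_bwd:
  assumes pos: "\<forall>a\<in>set z. 1 \<le> a" and len: "length z < length w" and sw: "sorted w"
  shows "fwd (bwd (w,z)) = (w,z)"
proof -
  let ?v = "lmax w z"
  have bw: "bwd (w,z) = (remove1 ?v w, insort ?v z)" unfolding bwd_def Let_def by simp
  have "fmax (remove1 ?v w) (insort ?v z) = ?v" using bwd_props(3)[OF pos len] bw by simp
  hence "fwd (bwd (w,z)) = (insort ?v (remove1 ?v w), remove1 ?v (insort ?v z))"
    unfolding fwd_def bw Let_def by simp
  thus ?thesis using insort_remove1[OF bwd_props(4)[OF pos len] sw] by simp
qed

definition PS :: "nat list \<Rightarrow> nat list \<Rightarrow> nat list list \<Rightarrow> nat list \<Rightarrow> bool" where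
  "PS \<sigma> \<sigma>b S w \<longleftrightarrow> (\<forall>i<length \<sigma>. rowOK (\<sigma>!i) (S!i)) \<and> (\<forall>i<length \<sigma>. adj (\<sigma>b!i) (S!i) ((S@[w])!Suc i))"
definition PT :: "nat list \<Rightarrow> nat list \<Rightarrow> nat list \<Rightarrow> nat list list \<Rightarrow> bool" where
  "PT \<tau> \<tau>b z Ts \<longleftrightarrow> (\<forall>j<length \<tau>. rowOK (\<tau>!j) (Ts!j)) \<and> (\<forall>j<length \<tau>. adj (\<tau>b!j) ((z#Ts)!j) (Ts!j))"

lemma all_split_a: "(\<forall>i<s+2+t. P i) \<longleftrightarrow> (\<forall>i<s. P i) \<and> P s \<and> P (Suc s) \<and> (\<forall>j<t. P (Suc (Suc (s+j))))"
proof
  assume "\<forall>i<s+2+t. P i" thus "(\<forall>i<s. P i) \<and> P s \<and> P (Suc s) \<and> (\<forall>j<t. P (Suc (Suc (s+j))))" by auto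
next
  assume a: "(\<forall>i<s. P i) \<and> P s \<and> P (Suc s) \<and> (\<forall>j<t. P (Suc (Suc (s+j))))"
  show "\<forall>i<s+2+t. P i"
  proof (intro allI impI)
    fix i assume i: "i < s+2+t"
    show "P i"
    proof (cases "i < s")
      case True thus ?thesis using a by blast
    next
      case False
      show ?thesis
      proof (cases "i = s \<or> i = Suc s")
        case True thus ?thesis using a by blast
      next
        case False
        hence "i - Suc (Suc s) < t" "i = Suc (Suc (s + (i - Suc (Suc s))))" using i \<open>\<not> i < s\<close> by auto
        thus ?thesis using a by metis
      qed
    qed
  qed
qed

lemma all_split_b: "(\<forall>i<s+1+t. P i) \<longleftrightarrow> (\<forall>i<s. P i) \<and> P s \<and> (\<forall>j<t. P (Suc (s+j)))"
proof
  assume "\<forall>i<s+1+t. P i" thus "(\<forall>i<s. P i) \<and> P s \<and> (\<forall>j<t. P (Suc (s+j)))" by auto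
next
  assume a: "(\<forall>i<s. P i) \<and> P s \<and> (\<forall>j<t. P (Suc (s+j)))"
  show "\<forall>i<s+1+t. P i"
  proof (intro allI impI)
    fix i assume i: "i < s+1+t"
    show "P i"
    proof (cases "i < s")
      case True thus ?thesis using a by blast
    next
      case False
      show ?thesis
      proof (cases "i = s")
        case True thus ?thesis using a by blast
      next
        case False
        hence "i - Suc s < t" "i = Suc (s + (i - Suc s))" using i \<open>\<not> i < s\<close> by auto
        thus ?thesis using a by metis
      qed
    qed
  qed
qed

lemma rowsOK_split:
  assumes l1: "length \<sigma>b = length \<sigma>" and l2: "length \<tau>b = length \<tau>"
    and l3: "length S = length \<sigma>" and l4: "length Ts = length \<tau>"
  shows "rowsOK (\<sigma>@[a1,a2]@\<tau>) (\<sigma>b@[b]@\<tau>b) (S@[w,z]@Ts) \<longleftrightarrow>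
         PS \<sigma> \<sigma>b S w \<and> rowOK a1 w \<and> adj b w z \<and> rowOK a2 z \<and> PT \<tau> \<tau>b z Ts"
proof -
  let ?s = "length \<sigma>" and ?t = "length \<tau>"
  have la: "length (\<sigma>@[a1,a2]@\<tau>) = ?s + 2 + ?t" by simp
  have lb: "length (\<sigma>b@[b]@\<tau>b) = ?s + 1 + ?t" using l1 l2 by simp
  have r: "(\<forall>i<length (\<sigma>@[a1,a2]@\<tau>). rowOK ((\<sigma>@[a1,a2]@\<tau>)!i) ((S@[w,z]@Ts)!i)) \<longleftrightarrow>
      (\<forall>i<?s. rowOK (\<sigma>!i) (S!i)) \<and> rowOK a1 w \<and> rowOK a2 z \<and> (\<forall>j<?t. rowOK (\<tau>!j) (Ts!j))"
    unfolding la all_split_a using l3 by (simp add: nth_append)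
  have a: "(\<forall>i<length (\<sigma>b@[b]@\<tau>b). adj ((\<sigma>b@[b]@\<tau>b)!i) ((S@[w,z]@Ts)!i) ((S@[w,z]@Ts)!Suc i)) \<longleftrightarrow>
      (\<forall>i<?s. adj (\<sigma>b!i) (S!i) ((S@[w])!Suc i)) \<and> adj b w z \<and> (\<forall>j<?t. adj (\<tau>b!j) ((z#Ts)!j) (Ts!j))"
  proof -
    have e1: "(S@[w,z]@Ts)!Suc i = (S@[w])!Suc i" if "i < ?s" for i
      using that l3 by (cases "Suc i < ?s") (auto simp: nth_append)
    have e2: "(S@[w,z]@Ts)!Suc (?s+j) = (z#Ts)!j" for j
      using l3 by (simp add: nth_append)
    have e3: "(S@[w,z]@Ts)!Suc (Suc (?s+j)) = Ts!j" for j
      using l3 by (simp add: nth_append)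
    show ?thesis unfolding lb all_split_b using l1 l3 e1 e2 e3 by (simp add: nth_append)
  qed
  show ?thesis unfolding rowsOK_def PS_def PT_def r a using l3 l4 by auto
qed

definition PSr :: "nat list \<Rightarrow> nat list \<Rightarrow> nat list list \<Rightarrow> bool" where
  "PSr \<sigma> \<sigma>b S \<longleftrightarrow> (\<forall>i<length \<sigma>. rowOK (\<sigma>!i) (S!i)) \<and> (\<forall>i. Suc i < length \<sigma> \<longrightarrow> adj (\<sigma>b!i) (S!i) (S!Suc i))"
definition PTr :: "nat list \<Rightarrow> nat list \<Rightarrow> nat list list \<Rightarrow> bool" where
  "PTr \<tau> \<tau>b Ts \<longleftrightarrow> (\<forall>j<length \<tau>. rowOK (\<tau>!j) (Ts!j)) \<and> (\<forall>j. Suc j < length \<tau> \<longrightarrow> adj (\<tau>b!Suc j) (Ts!j) (Ts!Suc j))"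

lemma adj1: "adj 1 u v \<longleftrightarrow> u!0 < v!(length v - 1)"
  unfolding adj_def by simp

lemma sorted_last_ex:
  assumes "sorted w" "w \<noteq> []"
  shows "u < w!(length w - 1) \<longleftrightarrow> (\<exists>a\<in>set w. u < a)"
proof
  assume "u < w!(length w - 1)" thus "\<exists>a\<in>set w. u < a" using assms(2) by (metis diff_less length_greater_0_conv less_one nth_mem)
next
  assume "\<exists>a\<in>set w. u < a"
  then obtain a where a: "a \<in> set w" "u < a" by blast
  then obtain i where i: "i < length w" "w!i = a" by (auto simp: in_set_conv_nth)
  have "w!i \<le> w!(length w - 1)" using i(1) by (intro sorted_nth_mono[OF assms(1)]) auto
  thus "u < w!(length w - 1)" using i a by simp
qed

lemma sorted_first_ex:
  assumes "sorted z" "z \<noteq> []"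
  shows "z!0 < u \<longleftrightarrow> (\<exists>a\<in>set z. a < u)"
proof
  assume "z!0 < u" thus "\<exists>a\<in>set z. a < u" using assms(2) by (metis length_greater_0_conv nth_mem)
next
  assume "\<exists>a\<in>set z. a < u"
  then obtain a where a: "a \<in> set z" "a < u" by blast
  then obtain i where i: "i < length z" "z!i = a" by (auto simp: in_set_conv_nth)
  have "z!0 \<le> z!i" using i(1) by (intro sorted_nth_mono[OF assms(1)]) auto
  thus "z!0 < u" using i a by simp
qed

lemma PS_iff:
  assumes l1: "length \<sigma>b = length \<sigma>" and l3: "length S = length \<sigma>"
    and lst: "\<sigma> \<noteq> [] \<longrightarrow> last \<sigma>b = 1" and sw: "sorted w" "w \<noteq> []"
  shows "PS \<sigma> \<sigma>b S w \<longleftrightarrow> PSr \<sigma> \<sigma>b S \<and> (\<sigma> \<noteq> [] \<longrightarrow> (\<exists>a\<in>set w. last S ! 0 < a))"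
proof (cases "\<sigma> = []")
  case True thus ?thesis using l3 unfolding PS_def PSr_def by simp
next
  case False
  define s where "s = length \<sigma>"
  have s0: "0 < s" using False unfolding s_def by simp
  have split: "(\<forall>i<s. P i) \<longleftrightarrow> (\<forall>i. Suc i < s \<longrightarrow> P i) \<and> P (s - 1)" for P
  proof
    assume "\<forall>i<s. P i" thus "(\<forall>i. Suc i < s \<longrightarrow> P i) \<and> P (s - 1)" using s0 by auto
  next
    assume a: "(\<forall>i. Suc i < s \<longrightarrow> P i) \<and> P (s - 1)"
    show "\<forall>i<s. P i"
    proof (intro allI impI)
      fix i assume i: "i < s"
      show "P i"
      proof (cases "Suc i < s")
        case True thus ?thesis using a by blast
      next
        case False hence "i = s - 1" using i by simp
        thus ?thesis using a by simp
      qed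
    qed
  qed
  have e1: "(S@[w])!Suc i = S!Suc i" if "Suc i < s" for i using that l3 unfolding s_def by (simp add: nth_append)
  have e2: "(S@[w])!Suc (s - 1) = w" using s0 l3 unfolding s_def by (simp add: nth_append)
  have "\<sigma>b \<noteq> []" using False l1 by auto
  hence e3: "\<sigma>b!(s-1) = 1" using lst False l1 unfolding s_def by (simp add: last_conv_nth)
  have "S \<noteq> []" using False l3 by auto
  hence e4: "S!(s-1) = last S" using l3 False unfolding s_def by (simp add: last_conv_nth)
  have "PS \<sigma> \<sigma>b S w \<longleftrightarrow> PSr \<sigma> \<sigma>b S \<and> adj 1 (last S) w"
    unfolding PS_def PSr_def s_def[symmetric] using e1 e2 e3 e4 split[of "\<lambda>i. adj (\<sigma>b!i) (S!i) ((S@[w])!Suc i)"]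
    by auto
  also have "adj 1 (last S) w \<longleftrightarrow> (\<exists>a\<in>set w. last S ! 0 < a)"
    unfolding adj1 by (rule sorted_last_ex[OF sw])
  finally show ?thesis using False by simp
qed

lemma PT_iff:
  assumes l2: "length \<tau>b = length \<tau>" and l4: "length Ts = length \<tau>"
    and hd1: "\<tau> \<noteq> [] \<longrightarrow> hd \<tau>b = 1" and hdp: "\<tau> \<noteq> [] \<longrightarrow> 1 \<le> hd \<tau>" and sz: "sorted z" "z \<noteq> []"
  shows "PT \<tau> \<tau>b z Ts \<longleftrightarrow> PTr \<tau> \<tau>b Ts \<and> (\<tau> \<noteq> [] \<longrightarrow> (\<exists>a\<in>set z. a < last (hd Ts)))"
proof (cases "\<tau> = []")
  case True thus ?thesis using l4 unfolding PT_def PTr_def by simp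
next
  case False
  have split: "(\<forall>j<length \<tau>. P j) \<longleftrightarrow> P 0 \<and> (\<forall>j. Suc j < length \<tau> \<longrightarrow> P (Suc j))" for P
  proof
    assume "\<forall>j<length \<tau>. P j" thus "P 0 \<and> (\<forall>j. Suc j < length \<tau> \<longrightarrow> P (Suc j))" using False by auto
  next
    assume a: "P 0 \<and> (\<forall>j. Suc j < length \<tau> \<longrightarrow> P (Suc j))"
    show "\<forall>j<length \<tau>. P j"
    proof (intro allI impI)
      fix j assume "j < length \<tau>" thus "P j" using a by (cases j) auto
    qed
  qed
  have "\<tau>b \<noteq> []" using False l2 by auto
  hence e3: "\<tau>b!0 = 1" using hd1 False l2 by (simp add: hd_conv_nth)
  have "PT \<tau> \<tau>b z Ts \<longleftrightarrow> PTr \<tau> \<tau>b Ts \<and> adj 1 z (Ts!0)"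
    unfolding PT_def PTr_def using e3 split[of "\<lambda>j. adj (\<tau>b!j) ((z#Ts)!j) (Ts!j)"] split[of "\<lambda>j. rowOK (\<tau>!j) (Ts!j)"]
    by auto
  also have "\<dots> \<longleftrightarrow> PTr \<tau> \<tau>b Ts \<and> (\<exists>a\<in>set z. a < last (hd Ts))"
  proof -
    have "PTr \<tau> \<tau>b Ts \<Longrightarrow> Ts!0 \<noteq> [] \<and> hd Ts = Ts!0"
      using False hdp l4 unfolding PTr_def rowOK_def by (cases Ts) (auto simp: hd_conv_nth)
    thus ?thesis unfolding adj1 using sorted_first_ex[OF sz] by (auto simp: last_conv_nth)
  qed
  finally show ?thesis using False by simp
qed

lemma PT_cons:
  assumes "\<tau> \<noteq> []" "length \<tau>b = length \<tau>"
  shows "PT \<tau> \<tau>b z (y#Ts') \<longleftrightarrow> rowOK (hd \<tau>) y \<and> adj (hd \<tau>b) z y \<and> PT (tl \<tau>) (tl \<tau>b) y Ts'"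
proof -
  obtain a \<tau>' where t: "\<tau> = a # \<tau>'" using assms(1) by (cases \<tau>) auto
  obtain b \<tau>b' where tb: "\<tau>b = b # \<tau>b'" using assms(2) t by (cases \<tau>b) auto
  show ?thesis unfolding PT_def t tb by (auto simp: less_Suc_eq_0_disj)
qed

lemma adj_app: "b \<le> length y \<Longrightarrow> adj b (y@z) q \<longleftrightarrow> adj b y q"
  unfolding adj_def by (auto simp: nth_append)

lemma PT_app:
  assumes "\<tau> \<noteq> [] \<longrightarrow> hd \<tau>b \<le> length y" "length \<tau>b = length \<tau>"
  shows "PT \<tau> \<tau>b (y@z) Ts \<longleftrightarrow> PT \<tau> \<tau>b y Ts"
proof (cases \<tau>)
  case Nil thus ?thesis unfolding PT_def by simp
next
  case (Cons a \<tau>')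
  obtain b \<tau>b' where tb: "\<tau>b = b # \<tau>b'" using assms(2) Cons by (cases \<tau>b) auto
  have "b \<le> length y" using assms(1) Cons tb by simp
  hence "adj b (y@z) (Ts!0) \<longleftrightarrow> adj b y (Ts!0)" by (rule adj_app)
  thus ?thesis unfolding PT_def Cons tb by (auto simp: less_Suc_eq_0_disj)
qed

lemma wcont_mid: "mset w + mset z = mset w2 + mset z2 \<Longrightarrow> wcont (S@[w,z]@Ts) = wcont (S@[w2,z2]@Ts)"
proof -
  assume a: "mset w + mset z = mset w2 + mset z2"
  have "mset (concat (S@[w,z]@Ts)) = mset (concat S) + (mset w + mset z) + mset (concat Ts)" by simp
  also have "\<dots> = mset (concat (S@[w2,z2]@Ts))" using a by simp
  finally have eq: "mset (concat (S@[w,z]@Ts)) = mset (concat (S@[w2,z2]@Ts))" .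
  show ?thesis unfolding wcont_def by (simp only: eq)
qed

lemma wcont_E: "mset w + mset z + mset y = mset w2 + mset g \<Longrightarrow> wcont (S@[w,z]@(y#Ts)) = wcont (S@[w2,g]@Ts)"
proof -
  assume a: "mset w + mset z + mset y = mset w2 + mset g"
  have "mset (concat (S@[w,z]@(y#Ts))) = mset (concat S) + (mset w + mset z + mset y) + mset (concat Ts)" by (simp add: ac_simps)
  also have "\<dots> = mset (concat (S@[w2,g]@Ts))" using a by simp
  finally have eq: "mset (concat (S@[w,z]@(y#Ts))) = mset (concat (S@[w2,g]@Ts))" .
  show ?thesis unfolding wcont_def by (simp only: eq)
qed

lemma Fform:
  assumes "sorted u" "sorted v" "b \<le> length u" "b \<le> length v"
  shows "adj b u v \<longleftrightarrow> (\<forall>h. F u v h \<le> int (length v) - int b)"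
proof -
  have "(cle v h \<le> clt u h + (length v - b)) \<longleftrightarrow> (int (cle v h) - int (clt u h) \<le> int (length v) - int b)" for h
    using assms(4) by linarith
  thus ?thesis unfolding adj_count[OF assms] F_def by simp
qed

definition Tup :: "nat list \<Rightarrow> nat list \<Rightarrow> nat list \<Rightarrow> nat list \<Rightarrow> nat \<Rightarrow> nat \<Rightarrow> nat \<Rightarrow> (nat \<Rightarrow> nat)
    \<Rightarrow> (nat list list \<times> nat list \<times> nat list \<times> nat list list) set" where
  "Tup \<sigma> \<sigma>b \<tau> \<tau>b a1 a2 b c = {(S,w,z,Ts). length S = length \<sigma> \<and> length Ts = length \<tau> \<and> PS \<sigma> \<sigma>b S w \<and>
      rowOK a1 w \<and> adj b w z \<and> rowOK a2 z \<and> PT \<tau> \<tau>b z Ts \<and> wcont (S@[w,z]@Ts) = c}"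

lemma split_list3:
  assumes "length W = s + 2 + t"
  shows "W = take s W @ [W!s, W!Suc s] @ drop (Suc (Suc s)) W"
proof -
  have "W = take s W @ W!s # drop (Suc s) W" using assms by (simp add: id_take_nth_drop)
  moreover have "drop (Suc s) W = W!Suc s # drop (Suc (Suc s)) W" using assms by (simp add: Cons_nth_drop_Suc)
  ultimately show ?thesis by simp
qed

lemma card_Tup:
  assumes l1: "length \<sigma>b = length \<sigma>" and l2: "length \<tau>b = length \<tau>"
  shows "card {W. rowsOK (\<sigma>@[a1,a2]@\<tau>) (\<sigma>b@[b]@\<tau>b) W \<and> wcont W = c} = card (Tup \<sigma> \<sigma>b \<tau> \<tau>b a1 a2 b c)"
    and "finite {W. rowsOK (\<sigma>@[a1,a2]@\<tau>) (\<sigma>b@[b]@\<tau>b) W \<and> wcont W = c} \<Longrightarrow> finite (Tup \<sigma> \<sigma>b \<tau> \<tau>b a1 a2 b c)"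
proof -
  let ?g = "\<lambda>(S::nat list list,w::nat list,z::nat list,Ts::nat list list). S@[w,z]@Ts"
  let ?T = "Tup \<sigma> \<sigma>b \<tau> \<tau>b a1 a2 b c"
  let ?W = "{W. rowsOK (\<sigma>@[a1,a2]@\<tau>) (\<sigma>b@[b]@\<tau>b) W \<and> wcont W = c}"
  have inj: "inj_on ?g ?T"
  proof (rule inj_onI)
    fix p q assume p: "p \<in> ?T" and q: "q \<in> ?T" and e: "?g p = ?g q"
    obtain S w z Ts where pp: "p = (S,w,z,Ts)" by (cases p) auto
    obtain S' w' z' Ts' where qq: "q = (S',w',z',Ts')" by (cases q) auto
    have "length S = length S'" using p q pp qq unfolding Tup_def by simp
    thus "p = q" using e pp qq by simp
  qed
  have img: "?g ` ?T = ?W"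
  proof
    show "?g ` ?T \<subseteq> ?W"
    proof
      fix W assume "W \<in> ?g ` ?T"
      then obtain S w z Ts where t: "(S,w,z,Ts) \<in> ?T" "W = S@[w,z]@Ts" by auto
      thus "W \<in> ?W" using rowsOK_split[OF l1 l2] unfolding Tup_def by auto
    qed
  next
    show "?W \<subseteq> ?g ` ?T"
    proof
      fix W assume W: "W \<in> ?W"
      hence len: "length W = length \<sigma> + 2 + length \<tau>" unfolding rowsOK_def by simp
      define S where "S = take (length \<sigma>) W"
      define Ts where "Ts = drop (Suc (Suc (length \<sigma>))) W"
      have e: "W = S@[W!length \<sigma>, W!Suc (length \<sigma>)]@Ts" unfolding S_def Ts_def by (rule split_list3[OF len])
      have ls: "length S = length \<sigma>" "length Ts = length \<tau>" unfolding S_def Ts_def using len by auto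
      have "(S, W!length \<sigma>, W!Suc (length \<sigma>), Ts) \<in> ?T"
        using W rowsOK_split[OF l1 l2 ls] e ls unfolding Tup_def by (metis (mono_tags, lifting) case_prodI mem_Collect_eq)
      thus "W \<in> ?g ` ?T" using e by (auto intro!: image_eqI[where x="(S, W!length \<sigma>, W!Suc (length \<sigma>), Ts)"])
    qed
  qed
  show "card ?W = card ?T" using card_image[OF inj] img by simp
  show "finite ?W \<Longrightarrow> finite ?T" using finite_image_iff[OF inj] img by simp
qed

lemma finite_words: "finite {W. rowsOK \<alpha> \<beta> W \<and> wcont W = c}"
proof (cases "{W. rowsOK \<alpha> \<beta> W \<and> wcont W = c} = {}")
  case True show ?thesis by (subst True) simp
next
  case False
  then obtain W0 where W0: "rowsOK \<alpha> \<beta> W0" "wcont W0 = c" by auto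
  let ?A = "set (concat W0)"
  let ?R = "{xs. set xs \<subseteq> ?A \<and> length xs \<le> sum_list \<alpha>}"
  have fR: "finite ?R" by (rule finite_lists_length_le) simp
  have sub: "{W. rowsOK \<alpha> \<beta> W \<and> wcont W = c} \<subseteq> {Ws. set Ws \<subseteq> ?R \<and> length Ws \<le> length \<alpha>}"
  proof
    fix W assume W: "W \<in> {W. rowsOK \<alpha> \<beta> W \<and> wcont W = c}"
    have "set (concat W) = ?A"
    proof -
      have "\<And>k. count (mset (concat W)) k = count (mset (concat W0)) k" using W W0 unfolding wcont_def by (auto simp: fun_eq_iff)
      hence "mset (concat W) = mset (concat W0)" by (simp add: multiset_eq_iff)
      thus ?thesis by (metis set_mset_mset)
    qed
    moreover have "length xs \<le> sum_list \<alpha>" if xs: "xs \<in> set W" for xs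
    proof -
      obtain i where i: "i < length W" "W!i = xs" using xs by (metis in_set_conv_nth)
      have "length (W!i) = \<alpha>!i" "i < length \<alpha>" using W i unfolding rowsOK_def rowOK_def by auto
      thus ?thesis using i member_le_sum_list[of "\<alpha>!i" \<alpha>] by simp
    qed
    ultimately show "W \<in> {Ws. set Ws \<subseteq> ?R \<and> length Ws \<le> length \<alpha>}" using W unfolding rowsOK_def by auto
  qed
  show ?thesis by (rule finite_subset[OF sub finite_lists_length_le[OF fR]])
qed

lemma valid_gen:
  assumes l1: "length \<sigma>b = length \<sigma>" and l2: "length \<tau>b = length \<tau>"
    and vs: "\<forall>i. Suc i < length \<sigma> \<longrightarrow> \<sigma>b!i \<le> min (\<sigma>!i) (\<sigma>!Suc i)"
    and vl: "\<sigma> \<noteq> [] \<longrightarrow> last \<sigma>b \<le> last \<sigma> \<and> last \<sigma>b \<le> a1"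
    and vb: "b \<le> a1" "b \<le> a2"
    and vh: "\<tau> \<noteq> [] \<longrightarrow> hd \<tau>b \<le> a2 \<and> hd \<tau>b \<le> hd \<tau>"
    and vt: "\<forall>j. Suc j < length \<tau> \<longrightarrow> \<tau>b!Suc j \<le> min (\<tau>!j) (\<tau>!Suc j)"
  shows "overlap_valid (\<sigma>@[a1,a2]@\<tau>) (\<sigma>b@[b]@\<tau>b)"
proof -
  let ?s = "length \<sigma>" and ?t = "length \<tau>"
  let ?\<alpha> = "\<sigma>@[a1,a2]@\<tau>" and ?\<beta> = "\<sigma>b@[b]@\<tau>b"
  have lb: "length ?\<beta> = ?s + 1 + ?t" using l1 l2 by simp
  have p1: "?\<beta>!i \<le> min (?\<alpha>!i) (?\<alpha>!Suc i)" if i: "i < ?s" for i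
  proof (cases "Suc i < ?s")
    case True thus ?thesis using vs i l1 by (simp add: nth_append)
  next
    case False
    hence ii: "i = ?s - 1" using i by simp
    have ne: "\<sigma> \<noteq> []" "\<sigma>b \<noteq> []" using i l1 by auto
    have "last \<sigma>b = \<sigma>b!i" "last \<sigma> = \<sigma>!i" using ii ne l1 by (simp_all add: last_conv_nth)
    moreover have "?\<alpha>!Suc i = a1" using ii ne by (simp add: nth_append)
    ultimately show ?thesis using vl ne i l1 by (simp add: nth_append)
  qed
  have p2: "?\<beta>!?s \<le> min (?\<alpha>!?s) (?\<alpha>!Suc ?s)" using vb l1 by (simp add: nth_append)
  have p3: "?\<beta>!Suc (?s + j) \<le> min (?\<alpha>!Suc (?s + j)) (?\<alpha>!Suc (Suc (?s + j)))" if j: "j < ?t" for j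
  proof (cases j)
    case 0
    have "\<tau> \<noteq> []" "\<tau>b \<noteq> []" using j l2 by auto
    thus ?thesis using vh 0 l1 by (simp add: nth_append hd_conv_nth)
  next
    case (Suc k)
    thus ?thesis using vt j l1 by (simp add: nth_append)
  qed
  have "\<forall>i<length ?\<beta>. ?\<beta>!i \<le> min (?\<alpha>!i) (?\<alpha>!Suc i)"
    unfolding lb all_split_b using p1 p2 p3 by blast
  thus ?thesis unfolding overlap_valid_def using lb by simp
qed

lemma Tup_iff: "(S,w,z,Ts) \<in> Tup \<sigma> \<sigma>b \<tau> \<tau>b a1 a2 b c \<longleftrightarrow>
   length S = length \<sigma> \<and> length Ts = length \<tau> \<and> PS \<sigma> \<sigma>b S w \<and>
   length w = a1 \<and> sorted w \<and> (\<forall>v\<in>set w. 1 \<le> v) \<and> adj b w z \<and>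
   length z = a2 \<and> sorted z \<and> (\<forall>v\<in>set z. 1 \<le> v) \<and> PT \<tau> \<tau>b z Ts \<and> wcont (S@[w,z]@Ts) = c"
  unfolding Tup_def rowOK_def by auto

lemma cle_cons: "int (cle (v # l) h) = int (cle l h) + ind (v \<le> h)"
  unfolding cle_def by (simp add: ind_def)
lemma clt_cons: "int (clt (v # l) h) = int (clt l h) + ind (v < h)"
  unfolding clt_def by (simp add: ind_def)
lemma cle_append: "cle (y @ z) h = cle y h + cle z h"
  unfolding cle_def by simp
lemma cle_all: "\<forall>a\<in>set y. a \<le> h \<Longrightarrow> cle y h = length y"
  unfolding cle_def by (induction y) auto
lemma cle_none: "\<forall>a\<in>set y. h < a \<Longrightarrow> cle y h = 0"
  unfolding cle_def by (induction y) auto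
lemma clt_none: "\<forall>a\<in>set y. h \<le> a \<Longrightarrow> clt y h = 0"
  unfolding clt_def by (induction y) auto
lemma cle_le_len: "cle y h \<le> length y"
  unfolding cle_def by (induction y) auto
lemma cle_lt_len: "a \<in> set y \<Longrightarrow> h < a \<Longrightarrow> cle y h < length y"
proof (induction y)
  case Nil thus ?case by simp
next
  case (Cons b y)
  have "cle (b#y) h \<le> cle y h + 1" unfolding cle_def by simp
  show ?case
  proof (cases "a = b")
    case True
    hence "cle (b#y) h = cle y h" using Cons.prems unfolding cle_def by simp
    thus ?thesis using cle_le_len[of y h] by simp
  next
    case False
    hence "cle y h < length y" using Cons by simp
    thus ?thesis using \<open>cle (b#y) h \<le> cle y h + 1\<close> by simp
  qed
qed
lemma clt_zero:
  assumes "clt w v = 0" shows "\<forall>a\<in>set w. v \<le> a"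
proof
  fix a assume a: "a \<in> set w"
  show "v \<le> a"
  proof (rule ccontr)
    assume "\<not> v \<le> a"
    hence "a \<in># filter_mset (\<lambda>b. b < v) (mset w)" using a by simp
    hence "filter_mset (\<lambda>b. b < v) (mset w) \<noteq> {#}" by (metis empty_iff set_mset_empty)
    thus False using assms unfolding clt_def by auto
  qed
qed

lemma exists_ge_remove1:
  assumes "v \<in> set w" "clt w v + 2 \<le> length w"
  shows "\<exists>b\<in>set (remove1 v w). v \<le> b"
proof -
  let ?M = "mset w"
  have part: "size ?M = size (filter_mset (\<lambda>b. b < v) ?M) + size (filter_mset (\<lambda>b. \<not> b < v) ?M)"
    by (metis multiset_partition size_union)
  hence ge2: "2 \<le> size (filter_mset (\<lambda>b. \<not> b < v) ?M)" using assms(2) unfolding clt_def by simp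
  have "int (size (filter_mset (\<lambda>b. \<not> b < v) (?M - {#v#}))) = int (size (filter_mset (\<lambda>b. \<not> b < v) ?M)) - ind (\<not> v < v)"
    by (rule size_filter_remove) (use assms(1) in simp)
  hence "1 \<le> size (filter_mset (\<lambda>b. \<not> b < v) (?M - {#v#}))" using ge2 by (simp add: ind_def)
  hence "filter_mset (\<lambda>b. \<not> b < v) (?M - {#v#}) \<noteq> {#}" by auto
  then obtain b where b: "b \<in># filter_mset (\<lambda>b. \<not> b < v) (?M - {#v#})" by blast
  have "b \<in># ?M - {#v#}" by (rule mset_subset_eqD[OF multiset_filter_subset b])
  moreover have "\<not> b < v" using b by (auto dest: in_diffD)
  ultimately have b1: "b \<in># mset (remove1 v w)" "v \<le> b" by simp_all
  hence "b \<in> set (remove1 v w)" by (metis set_mset_mset)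
  thus ?thesis using b1(2) by blast
qed

lemma PS_transfer:
  assumes l1: "length \<sigma>b = length \<sigma>" and l3: "length S = length \<sigma>" and lst: "\<sigma> \<noteq> [] \<longrightarrow> last \<sigma>b = 1"
    and P: "PS \<sigma> \<sigma>b S w" and s1: "sorted w" "w \<noteq> []" and s2: "sorted w2" "w2 \<noteq> []"
    and tr: "\<And>u. (\<exists>a\<in>set w. u < a) \<Longrightarrow> (\<exists>a\<in>set w2. u < a)"
  shows "PS \<sigma> \<sigma>b S w2"
  using P PS_iff[OF l1 l3 lst s1] PS_iff[OF l1 l3 lst s2] tr by blast

lemma PT_transfer:
  assumes l2: "length \<tau>b = length \<tau>" and l4: "length Ts = length \<tau>"
    and hd1: "\<tau> \<noteq> [] \<longrightarrow> hd \<tau>b = 1" and hdp: "\<tau> \<noteq> [] \<longrightarrow> 1 \<le> hd \<tau>"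
    and P: "PT \<tau> \<tau>b z Ts" and s1: "sorted z" "z \<noteq> []" and s2: "sorted z2" "z2 \<noteq> []"
    and tr: "\<And>u. (\<exists>a\<in>set z. a < u) \<Longrightarrow> (\<exists>a\<in>set z2. a < u)"
  shows "PT \<tau> \<tau>b z2 Ts"
  using P PT_iff[OF l2 l4 hd1 hdp s1] PT_iff[OF l2 l4 hd1 hdp s2] tr by blast

lemma PT_nil: "\<tau> = [] \<Longrightarrow> PT \<tau> \<tau>b z Ts \<longleftrightarrow> True"
  unfolding PT_def by simp

definition Phi :: "nat list list \<times> nat list \<times> nat list \<times> nat list list \<Rightarrow> nat list list \<times> nat list \<times> nat list \<times> nat list list" where
  "Phi t = (case t of (S,w,z,Ts) \<Rightarrow> (S, fst (bwd (w,z)), snd (bwd (w,z)), Ts))"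
definition Psi :: "nat list list \<times> nat list \<times> nat list \<times> nat list list \<Rightarrow> nat list list \<times> nat list \<times> nat list \<times> nat list list" where
  "Psi t = (case t of (S,w,z,Ts) \<Rightarrow> (S, fst (fwd (w,z)), snd (fwd (w,z)), Ts))"

definition Bad :: "nat list \<Rightarrow> nat list \<Rightarrow> nat list \<Rightarrow> nat list \<Rightarrow> nat \<Rightarrow> nat \<Rightarrow> nat \<Rightarrow> (nat \<Rightarrow> nat)
    \<Rightarrow> (nat list list \<times> nat list \<times> nat list \<times> nat list list) set" where
  "Bad \<sigma> \<sigma>b \<tau> \<tau>b m n x c = {(S,w,z,Ts). (S,w,z,Ts) \<in> Tup \<sigma> \<sigma>b \<tau> \<tau>b m n x c \<and> \<not> adj n w z \<and> \<tau> \<noteq> [] \<and>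
      \<not> (\<exists>a\<in>set (snd (fwd (w,z))). a < last (hd Ts))}"

locale hyp =
  fixes \<sigma> \<tau> \<sigma>b \<tau>b :: "nat list" and m n x :: nat and c :: "nat \<Rightarrow> nat"
  assumes comp_\<sigma>: "\<forall>a\<in>set \<sigma>. 1 \<le> a" and comp_\<tau>: "\<forall>a\<in>set \<tau>. 1 \<le> a"
    and len_\<sigma>b: "length \<sigma>b = length \<sigma>" and len_\<tau>b: "length \<tau>b = length \<tau>"
    and last_\<sigma>b: "\<sigma> \<noteq> [] \<longrightarrow> last \<sigma>b = 1" and hd_\<tau>b: "\<tau> \<noteq> [] \<longrightarrow> hd \<tau>b = 1"
    and xn: "x < n" and nm: "n \<le> m"

context hyp
begin

lemma hd_\<tau>: "\<tau> \<noteq> [] \<longrightarrow> 1 \<le> hd \<tau>" using comp_\<tau> by auto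

lemma TC_sub: "Tup \<sigma> \<sigma>b \<tau> \<tau>b m n n c \<subseteq> Tup \<sigma> \<sigma>b \<tau> \<tau>b m n x c"
proof
  fix t assume t: "t \<in> Tup \<sigma> \<sigma>b \<tau> \<tau>b m n n c"
  obtain S w z Ts where tt: "t = (S,w,z,Ts)" by (cases t) auto
  note T = t[unfolded tt Tup_iff]
  have "\<forall>h. F w z h \<le> int n - int n" using T Fform[of w z n] nm by auto
  hence "\<forall>h. F w z h \<le> int n - int x" using xn by (auto intro: order_trans[of _ 0])
  hence "adj x w z" using T Fform[of w z x] nm xn by auto
  thus "t \<in> Tup \<sigma> \<sigma>b \<tau> \<tau>b m n x c" using T unfolding tt Tup_iff by simp
qed

lemma notC:
  assumes "(S,w,z,Ts) \<in> Tup \<sigma> \<sigma>b \<tau> \<tau>b m n x c"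
  shows "(S,w,z,Ts) \<notin> Tup \<sigma> \<sigma>b \<tau> \<tau>b m n n c \<longleftrightarrow> 0 < F w z (fmax w z)"
proof -
  note T = assms[unfolded Tup_iff]
  have "(S,w,z,Ts) \<in> Tup \<sigma> \<sigma>b \<tau> \<tau>b m n n c \<longleftrightarrow> adj n w z" using T unfolding Tup_iff by simp
  also have "\<dots> \<longleftrightarrow> (\<forall>h. F w z h \<le> 0)" using T Fform[of w z n] nm by auto
  also have "\<dots> \<longleftrightarrow> F w z (fmax w z) \<le> 0" using fmax_max[of w z] by (meson order_trans)
  finally show ?thesis by auto
qed

end

context hyp
begin

lemma Phi_in:
  assumes nt: "2 \<le> n \<or> \<tau> = []" and t: "(S,w',z',Ts) \<in> Tup \<sigma> \<sigma>b \<tau> \<tau>b (m+1) (n-1) x c"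
  shows "Phi (S,w',z',Ts) \<in> Tup \<sigma> \<sigma>b \<tau> \<tau>b m n x c"
    and "Phi (S,w',z',Ts) \<notin> Tup \<sigma> \<sigma>b \<tau> \<tau>b m n n c"
    and "Phi (S,w',z',Ts) \<notin> Bad \<sigma> \<sigma>b \<tau> \<tau>b m n x c"
    and "Psi (Phi (S,w',z',Ts)) = (S,w',z',Ts)"
proof -
  note T = t[unfolded Tup_iff]
  have posz': "\<forall>a\<in>set z'. 1 \<le> a" using T by blast
  have lenl: "length z' < length w'" using T nm by simp
  have sw': "sorted w'" "sorted z'" using T by blast+
  define v where "v = lmax w' z'"
  have bw: "bwd (w',z') = (remove1 v w', insort v z')" unfolding bwd_def Let_def v_def by simp
  define w where "w = remove1 v w'"
  define z where "z = insort v z'"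
  have Phi_eq: "Phi (S,w',z',Ts) = (S,w,z,Ts)" unfolding Phi_def w_def z_def by (simp add: bw)
  have vw: "v \<in> set w'" using bwd_props(4)[OF posz' lenl] unfolding v_def .
  have F1: "\<forall>h. F w z h \<le> F w' z' v + 1" using bwd_props(1)[OF posz' lenl] bw unfolding v_def w_def z_def by simp
  have F2: "F w z v = F w' z' v + 1" using bwd_props(2)[OF posz' lenl] bw unfolding v_def w_def z_def by simp
  have "adj x w' z'" using T by blast
  hence Fv_le: "F w' z' v \<le> int (n-1) - int x" using Fform[OF sw', of x] T nm xn by auto
  have Fv_ge: "0 \<le> F w' z' v" using lmax_nonneg[OF posz' lenl] unfolding v_def .
  have lw: "length w = m" using T vw unfolding w_def by (simp add: length_remove1)
  have sw: "sorted w" using T unfolding w_def by (simp add: sorted_remove1)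
  have pw: "\<forall>a\<in>set w. 1 \<le> a" using T unfolding w_def by (meson set_remove1_subset subsetD)
  have lz: "length z = n" using T xn unfolding z_def by simp
  have sz: "sorted z" using T unfolding z_def by (simp add: sorted_insort)
  have pz: "\<forall>a\<in>set z. 1 \<le> a" using T vw unfolding z_def by (simp add: set_insort_key)
  have n1: "1 \<le> n" using xn by simp
  have nn: "int (n-1) = int n - 1" using n1 by simp
  have "\<forall>h. F w z h \<le> int n - int x"
  proof
    fix h have "F w z h \<le> F w' z' v + 1" using F1 by blast
    thus "F w z h \<le> int n - int x" using Fv_le nn by linarith
  qed
  hence adjx: "adj x w z" using Fform[OF sw sz, of x] lw lz xn nm by auto
  have nadj: "\<not> adj n w z"
  proof
    assume "adj n w z"
    hence "F w z v \<le> 0" using Fform[OF sw sz, of n] lw lz nm by auto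
    thus False using F2 Fv_ge by simp
  qed
  have PSw: "PS \<sigma> \<sigma>b S w"
  proof (rule PS_transfer[OF len_\<sigma>b _ last_\<sigma>b])
    show "length S = length \<sigma>" using T by blast
    show "PS \<sigma> \<sigma>b S w'" using T by blast
    show "sorted w'" "sorted w" by (fact sw'(1), fact sw)
    show "w' \<noteq> []" using vw by auto
    show "w \<noteq> []" using lw xn nm by auto
    fix u assume "\<exists>a\<in>set w'. u < a"
    then obtain a where a: "a \<in> set w'" "u < a" by blast
    show "\<exists>a\<in>set w. u < a"
    proof (cases "a = v")
      case False thus ?thesis using a unfolding w_def by auto
    next
      case True
      have "int (clt w' v) \<le> int (cle z' v)" using Fv_ge unfolding F_def by simp
      moreover have "cle z' v \<le> length z'" by (rule cle_le_len)
      ultimately have "clt w' v + 2 \<le> length w'" using T nm xn by simp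
      then obtain b where b: "b \<in> set w" "v \<le> b" using exists_ge_remove1[OF vw] unfolding w_def by blast
      have "u < b" using a True b(2) by simp
      thus ?thesis using b(1) by blast
    qed
  qed
  have PTz: "PT \<tau> \<tau>b z Ts"
  proof (cases "\<tau> = []")
    case True thus ?thesis using PT_nil by simp
  next
    case False
    hence n2: "2 \<le> n" using nt by simp
    show ?thesis
    proof (rule PT_transfer[OF len_\<tau>b _ hd_\<tau>b hd_\<tau>])
      show "length Ts = length \<tau>" using T by blast
      show "PT \<tau> \<tau>b z' Ts" using T by blast
      show "sorted z'" "sorted z" by (fact sw'(2), fact sz)
      show "z' \<noteq> []" using T n2 by auto
      show "z \<noteq> []" unfolding z_def by (simp add: insort_not_Nil)
      fix u assume "\<exists>a\<in>set z'. a < u" thus "\<exists>a\<in>set z. a < u" unfolding z_def by (auto simp: set_insort_key)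
    qed
  qed
  have "mset w + mset z = mset w' + mset z'" using vw unfolding w_def z_def by simp
  hence cont: "wcont (S@[w,z]@Ts) = c" using T wcont_mid by metis
  have inA: "(S,w,z,Ts) \<in> Tup \<sigma> \<sigma>b \<tau> \<tau>b m n x c"
    unfolding Tup_iff using T lw sw pw lz sz pz adjx PSw PTz cont by blast
  show "Phi (S,w',z',Ts) \<in> Tup \<sigma> \<sigma>b \<tau> \<tau>b m n x c" using inA Phi_eq by simp
  show "Phi (S,w',z',Ts) \<notin> Tup \<sigma> \<sigma>b \<tau> \<tau>b m n n c" unfolding Phi_eq Tup_iff using nadj by blast
  have fw: "fwd (w,z) = (w',z')" using fwd_bwd[OF posz' lenl sw'(1)] bw unfolding w_def z_def by simp
  show "Psi (Phi (S,w',z',Ts)) = (S,w',z',Ts)" unfolding Phi_eq Psi_def by (simp add: fw)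
  show "Phi (S,w',z',Ts) \<notin> Bad \<sigma> \<sigma>b \<tau> \<tau>b m n x c"
  proof
    assume "Phi (S,w',z',Ts) \<in> Bad \<sigma> \<sigma>b \<tau> \<tau>b m n x c"
    hence B0: "\<tau> \<noteq> []" "\<not> (\<exists>a\<in>set (snd (fwd (w,z))). a < last (hd Ts))" unfolding Phi_eq Bad_def by auto
    have "snd (fwd (w,z)) = z'" by (simp add: fw)
    hence B: "\<tau> \<noteq> []" "\<not> (\<exists>a\<in>set z'. a < last (hd Ts))" using B0 by simp_all
    hence n2: "2 \<le> n" using nt by simp
    have "z' \<noteq> []" using T n2 by auto
    hence "\<exists>a\<in>set z'. a < last (hd Ts)" using PT_iff[OF len_\<tau>b _ hd_\<tau>b hd_\<tau> sw'(2)] T B(1) by blast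
    thus False using B by blast
  qed
qed

lemma Psi_in:
  assumes t: "(S,w,z,Ts) \<in> Tup \<sigma> \<sigma>b \<tau> \<tau>b m n x c" and nC: "(S,w,z,Ts) \<notin> Tup \<sigma> \<sigma>b \<tau> \<tau>b m n n c"
    and nB: "(S,w,z,Ts) \<notin> Bad \<sigma> \<sigma>b \<tau> \<tau>b m n x c"
  shows "Psi (S,w,z,Ts) \<in> Tup \<sigma> \<sigma>b \<tau> \<tau>b (m+1) (n-1) x c" and "Phi (Psi (S,w,z,Ts)) = (S,w,z,Ts)"
proof -
  note T = t[unfolded Tup_iff]
  have M: "0 < F w z (fmax w z)" using notC[OF t] nC by simp
  have nadj: "\<not> adj n w z" using nC T unfolding Tup_iff by blast
  have posz: "\<forall>a\<in>set z. 1 \<le> a" using T by blast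
  have len: "length z \<le> Suc (length w)" using T nm by simp
  have sw: "sorted w" "sorted z" using T by blast+
  define v where "v = fmax w z"
  have fw: "fwd (w,z) = (insort v w, remove1 v z)" unfolding fwd_def Let_def v_def by simp
  define w' where "w' = insort v w"
  define z' where "z' = remove1 v z"
  have Psi_eq: "Psi (S,w,z,Ts) = (S,w',z',Ts)" unfolding Psi_def w'_def z'_def by (simp add: fw)
  have vz: "v \<in> set z" using fwd_props(4)[OF posz M len] unfolding v_def .
  have F1: "\<forall>h. F w' z' h \<le> F w z v - 1" using fwd_props(1)[OF posz M len] fw unfolding v_def w'_def z'_def by simp
  have "adj x w z" using T by blast
  hence Fv: "F w z v \<le> int n - int x" using Fform[OF sw, of x] T nm xn by auto
  have lw': "length w' = m+1" using T unfolding w'_def by simp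
  have sw': "sorted w'" using T unfolding w'_def by (simp add: sorted_insort)
  have pw': "\<forall>a\<in>set w'. 1 \<le> a" using T vz unfolding w'_def by (simp add: set_insort_key)
  have lz': "length z' = n - 1" using T vz unfolding z'_def by (simp add: length_remove1)
  have sz': "sorted z'" using T unfolding z'_def by (simp add: sorted_remove1)
  have pz': "\<forall>a\<in>set z'. 1 \<le> a" using T unfolding z'_def by (meson set_remove1_subset subsetD)
  have nn: "int (n-1) = int n - 1" using xn by simp
  have Fb: "\<forall>h. F w' z' h \<le> int (n-1) - int x"
  proof
    fix h have "F w' z' h \<le> F w z v - 1" using F1 by blast
    thus "F w' z' h \<le> int (n-1) - int x" using Fv nn by linarith
  qed
  have eqv: "adj x w' z' \<longleftrightarrow> (\<forall>h. F w' z' h \<le> int (length z') - int x)"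
    by (rule Fform[OF sw' sz']) (use lw' lz' xn nm in auto)
  have adjx: "adj x w' z'" using Fb unfolding eqv lz' .
  have PSw: "PS \<sigma> \<sigma>b S w'"
  proof (rule PS_transfer[OF len_\<sigma>b _ last_\<sigma>b])
    show "length S = length \<sigma>" using T by blast
    show "PS \<sigma> \<sigma>b S w" using T by blast
    show "sorted w" "sorted w'" by (fact sw(1), fact sw')
    show "w \<noteq> []" using T xn nm by auto
    show "w' \<noteq> []" unfolding w'_def by (simp add: insort_not_Nil)
    fix u assume "\<exists>a\<in>set w. u < a" thus "\<exists>a\<in>set w'. u < a" unfolding w'_def by (auto simp: set_insort_key)
  qed
  have PTz: "PT \<tau> \<tau>b z' Ts"
  proof (cases "\<tau> = []")
    case True thus ?thesis using PT_nil by simp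
  next
    case False
    have "\<not> (\<not> (\<exists>a\<in>set (snd (fwd (w,z))). a < last (hd Ts)))" using nB t nadj False unfolding Bad_def by blast
    moreover have "snd (fwd (w,z)) = z'" by (simp add: fw z'_def)
    ultimately have ex: "\<exists>a\<in>set z'. a < last (hd Ts)" by simp
    hence ne: "z' \<noteq> []" by auto
    have "z \<noteq> []" using vz by auto
    hence "PTr \<tau> \<tau>b Ts" using PT_iff[OF len_\<tau>b _ hd_\<tau>b hd_\<tau> sw(2)] T by blast
    thus ?thesis using PT_iff[OF len_\<tau>b _ hd_\<tau>b hd_\<tau> sz' ne] T ex by blast
  qed
  have "mset w' + mset z' = mset w + mset z" using vz unfolding w'_def z'_def by simp
  hence cont: "wcont (S@[w',z']@Ts) = c" using T wcont_mid by metis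
  have "(S,w',z',Ts) \<in> Tup \<sigma> \<sigma>b \<tau> \<tau>b (m+1) (n-1) x c"
    unfolding Tup_iff using T lw' sw' pw' lz' sz' pz' adjx PSw PTz cont by blast
  thus "Psi (S,w,z,Ts) \<in> Tup \<sigma> \<sigma>b \<tau> \<tau>b (m+1) (n-1) x c" using Psi_eq by simp
  have bw: "bwd (w',z') = (w,z)" using bwd_fwd[OF posz M len sw(2)] fw unfolding w'_def z'_def by simp
  show "Phi (Psi (S,w,z,Ts)) = (S,w,z,Ts)" unfolding Psi_eq Phi_def by (simp add: bw)
qed

lemma Bad_sub: "Bad \<sigma> \<sigma>b \<tau> \<tau>b m n x c \<subseteq> Tup \<sigma> \<sigma>b \<tau> \<tau>b m n x c - Tup \<sigma> \<sigma>b \<tau> \<tau>b m n n c"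
proof
  fix t assume t: "t \<in> Bad \<sigma> \<sigma>b \<tau> \<tau>b m n x c"
  obtain S w z Ts where tt: "t = (S,w,z,Ts)" using prod_cases4 by blast
  have a: "(S,w,z,Ts) \<in> Tup \<sigma> \<sigma>b \<tau> \<tau>b m n x c" "\<not> adj n w z" using t unfolding tt Bad_def by auto
  have "(S,w,z,Ts) \<notin> Tup \<sigma> \<sigma>b \<tau> \<tau>b m n n c" unfolding Tup_iff using a(2) by blast
  thus "t \<in> Tup \<sigma> \<sigma>b \<tau> \<tau>b m n x c - Tup \<sigma> \<sigma>b \<tau> \<tau>b m n n c" using a(1) tt by simp
qed

lemma diff_decomp:
  assumes nt: "2 \<le> n \<or> \<tau> = []"
  shows "Tup \<sigma> \<sigma>b \<tau> \<tau>b m n x c - Tup \<sigma> \<sigma>b \<tau> \<tau>b m n n c =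
           Phi ` Tup \<sigma> \<sigma>b \<tau> \<tau>b (m+1) (n-1) x c \<union> Bad \<sigma> \<sigma>b \<tau> \<tau>b m n x c"
    and "Phi ` Tup \<sigma> \<sigma>b \<tau> \<tau>b (m+1) (n-1) x c \<inter> Bad \<sigma> \<sigma>b \<tau> \<tau>b m n x c = {}"
    and "inj_on Phi (Tup \<sigma> \<sigma>b \<tau> \<tau>b (m+1) (n-1) x c)"
proof -
  let ?A = "Tup \<sigma> \<sigma>b \<tau> \<tau>b m n x c" and ?C = "Tup \<sigma> \<sigma>b \<tau> \<tau>b m n n c"
  let ?B = "Tup \<sigma> \<sigma>b \<tau> \<tau>b (m+1) (n-1) x c" and ?Bad = "Bad \<sigma> \<sigma>b \<tau> \<tau>b m n x c"
  have PB: "Phi t \<in> ?A \<and> Phi t \<notin> ?C \<and> Phi t \<notin> ?Bad \<and> Psi (Phi t) = t" if t: "t \<in> ?B" for t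
  proof -
    obtain S w z Ts where tt: "t = (S,w,z,Ts)" using prod_cases4 by blast
    show ?thesis using Phi_in[OF nt t[unfolded tt]] tt by simp
  qed
  show "inj_on Phi ?B"
  proof (rule inj_onI)
    fix p q assume "p \<in> ?B" "q \<in> ?B" "Phi p = Phi q"
    thus "p = q" using PB by metis
  qed
  show "Phi ` ?B \<inter> ?Bad = {}" using PB by blast
  show "?A - ?C = Phi ` ?B \<union> ?Bad"
  proof
    show "?A - ?C \<subseteq> Phi ` ?B \<union> ?Bad"
    proof
      fix t assume t: "t \<in> ?A - ?C"
      show "t \<in> Phi ` ?B \<union> ?Bad"
      proof (cases "t \<in> ?Bad")
        case True thus ?thesis by simp
      next
        case False
        obtain S w z Ts where tt: "t = (S,w,z,Ts)" using prod_cases4 by blast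
        have "Psi t \<in> ?B" "Phi (Psi t) = t" using Psi_in[of S w z Ts] t False tt by auto
        thus ?thesis by (metis UnI1 image_eqI)
      qed
    qed
    show "Phi ` ?B \<union> ?Bad \<subseteq> ?A - ?C" using PB Bad_sub by blast
  qed
qed

lemma diff_n1:
  assumes "n = 1" "\<tau> \<noteq> []"
  shows "Tup \<sigma> \<sigma>b \<tau> \<tau>b m n x c - Tup \<sigma> \<sigma>b \<tau> \<tau>b m n n c = Bad \<sigma> \<sigma>b \<tau> \<tau>b m n x c"
proof
  show "Bad \<sigma> \<sigma>b \<tau> \<tau>b m n x c \<subseteq> Tup \<sigma> \<sigma>b \<tau> \<tau>b m n x c - Tup \<sigma> \<sigma>b \<tau> \<tau>b m n n c" by (rule Bad_sub)
  show "Tup \<sigma> \<sigma>b \<tau> \<tau>b m n x c - Tup \<sigma> \<sigma>b \<tau> \<tau>b m n n c \<subseteq> Bad \<sigma> \<sigma>b \<tau> \<tau>b m n x c"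
  proof
    fix t assume t: "t \<in> Tup \<sigma> \<sigma>b \<tau> \<tau>b m n x c - Tup \<sigma> \<sigma>b \<tau> \<tau>b m n n c"
    obtain S w z Ts where tt: "t = (S,w,z,Ts)" using prod_cases4 by blast
    have tA: "(S,w,z,Ts) \<in> Tup \<sigma> \<sigma>b \<tau> \<tau>b m n x c" and tC: "(S,w,z,Ts) \<notin> Tup \<sigma> \<sigma>b \<tau> \<tau>b m n n c" using t tt by auto
    note T = tA[unfolded Tup_iff]
    have M: "0 < F w z (fmax w z)" using notC[OF tA] tC by simp
    have nadj: "\<not> adj n w z" using tC T unfolding Tup_iff by blast
    have posz: "\<forall>a\<in>set z. 1 \<le> a" using T by blast
    have vz: "fmax w z \<in> set z" by (rule fmax_mem[OF posz M])
    have "length (remove1 (fmax w z) z) = 0" using vz T assms(1) by (simp add: length_remove1)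
    hence "snd (fwd (w,z)) = []" unfolding fwd_def Let_def by simp
    thus "t \<in> Bad \<sigma> \<sigma>b \<tau> \<tau>b m n x c" unfolding tt Bad_def using tA nadj assms(2) by simp
  qed
qed

end

lemma sorted_le_last: "sorted y \<Longrightarrow> a \<in> set y \<Longrightarrow> a \<le> last y"
proof -
  assume s: "sorted y" and a: "a \<in> set y"
  then obtain i where i: "i < length y" "y!i = a" by (metis in_set_conv_nth)
  have "y!i \<le> y!(length y - 1)" using i(1) by (intro sorted_nth_mono[OF s]) auto
  moreover have "y \<noteq> []" using i(1) by auto
  ultimately show ?thesis using i by (simp add: last_conv_nth)
qed

definition PsiE :: "nat \<Rightarrow> nat list list \<times> nat list \<times> nat list \<times> nat list list \<Rightarrow> nat list list \<times> nat list \<times> nat list \<times> nat list list" where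
  "PsiE p t = (case t of (S,w',g,Ts') \<Rightarrow> (S, tl w', insort (hd w') (drop p g), take p g # Ts'))"
definition PhiE :: "nat list list \<times> nat list \<times> nat list \<times> nat list list \<Rightarrow> nat list list \<times> nat list \<times> nat list \<times> nat list list" where
  "PhiE t = (case t of (S,w,z,Ts) \<Rightarrow> (S, insort (fmax w z) w, hd Ts @ remove1 (fmax w z) z, tl Ts))"

context hyp
begin

lemma E_to_Bad:
  assumes tne: "\<tau> \<noteq> []" and hb: "tl \<tau> \<noteq> [] \<longrightarrow> hd (tl \<tau>b) \<le> hd \<tau>"
    and e: "(S,w',g,Ts') \<in> Tup \<sigma> \<sigma>b (tl \<tau>) (tl \<tau>b) (m+1) (n-1+hd \<tau>) n c"
  shows "PsiE (hd \<tau>) (S,w',g,Ts') \<in> Bad \<sigma> \<sigma>b \<tau> \<tau>b m n x c"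
    and "PhiE (PsiE (hd \<tau>) (S,w',g,Ts')) = (S,w',g,Ts')"
proof -
  note T = e[unfolded Tup_iff]
  define p where "p = hd \<tau>"
  have p1: "1 \<le> p" using hd_\<tau> tne unfolding p_def by simp
  have n1: "1 \<le> n" using xn by simp
  have lg: "length g = n - 1 + p" using T unfolding p_def by simp
  have lw': "length w' = m + 1" using T by simp
  have sw': "sorted w'" and sg: "sorted g" using T by blast+
  have pw': "\<forall>a\<in>set w'. 1 \<le> a" and pg: "\<forall>a\<in>set g. 1 \<le> a" using T by blast+
  define v where "v = hd w'"
  define w where "w = tl w'"
  define y where "y = take p g"
  define z'' where "z'' = drop p g"
  define z where "z = insort v z''"
  have w'_eq: "w' = v # w" using lw' unfolding v_def w_def by (cases w') auto
  have g_eq: "g = y @ z''" unfolding y_def z''_def by simp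
  have ly: "length y = p" using lg unfolding y_def by simp
  have lz'': "length z'' = n - 1" using lg unfolding z''_def by simp
  have sy: "sorted y" "sorted z''" "\<forall>a\<in>set y. \<forall>b\<in>set z''. a \<le> b" using sg unfolding g_eq by (simp_all add: sorted_append)
  have yne: "y \<noteq> []" using ly p1 by auto
  define yl where "yl = last y"
  have yl_in: "yl \<in> set y" unfolding yl_def using yne by simp
  have yl_ge: "\<forall>a\<in>set y. a \<le> yl" unfolding yl_def using sorted_le_last[OF sy(1)] by blast
  have z_ge: "\<forall>b\<in>set z''. yl \<le> b" using sy(3) yl_in by blast
  have "adj n w' g" using T by blast
  hence aj: "\<forall>j<n. w'!j < g!(length g - n + j)" unfolding adj_def .
  have "w'!0 < g!(length g - n + 0)" using n1 by (intro mp[OF spec[OF aj, of 0]]) simp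
  moreover have "length g - n + 0 = p - 1" using lg p1 n1 by simp
  moreover have "g!(p-1) = yl" unfolding g_eq yl_def using ly p1 yne by (simp add: nth_append last_conv_nth)
  ultimately have vyl: "v < yl" using w'_eq by simp
  have wv: "\<forall>a\<in>set w. v \<le> a" using sw' unfolding w'_eq by simp
  have zv: "\<forall>b\<in>set z''. v < b" using z_ge vyl by force
  have z_eq: "z = v # z''" unfolding z_def using zv by (simp add: insort_is_Cons less_imp_le)
  have adjc: "\<forall>h. F w' g h \<le> int (length g) - int n"
    using Fform[OF sw' sg, of n] \<open>adj n w' g\<close> lw' lg nm p1 by auto
  have Fle: "F w z h \<le> 1" for h
  proof (cases "h < yl")
    case True
    have "cle z'' h = 0" using z_ge True by (intro cle_none) force
    hence "F w z h = ind (v \<le> h) - int (clt w h)" unfolding F_def z_eq using cle_cons[of v z'' h] by simp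
    thus ?thesis by (simp add: ind_def)
  next
    case False
    have cy: "cle y h = p" using cle_all[of y h] yl_ge False ly by force
    have vh: "v < h" using vyl False by simp
    have "F w' g h = int (cle y h) + int (cle z'' h) - (int (clt w h) + 1)"
      unfolding F_def g_eq w'_eq using clt_cons[of v w h] vh by (simp add: cle_append ind_def)
    hence "int (cle z'' h) \<le> int (clt w h)" using adjc[rule_format, of h] cy lg n1 by simp
    moreover have "F w z h = int (cle z'' h) + 1 - int (clt w h)" unfolding F_def z_eq using cle_cons[of v z'' h] vh by (simp add: ind_def)
    ultimately show ?thesis by simp
  qed
  have Fv: "F w z v = 1"
  proof -
    have "cle z'' v = 0" using zv by (intro cle_none) blast
    moreover have "clt w v = 0" using wv by (intro clt_none) blast
    ultimately show ?thesis unfolding F_def z_eq using cle_cons[of v z'' v] by (simp add: ind_def)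
  qed
  have Flt: "F w z h < F w z v" if "h < v" for h
  proof -
    have "cle z'' h = 0" using zv that by (intro cle_none) force
    moreover have "clt w h = 0" using wv that by (intro clt_none) force
    ultimately have "F w z h = 0" unfolding F_def z_eq using cle_cons[of v z'' h] that by (simp add: ind_def)
    thus ?thesis using Fv by simp
  qed
  have fm: "fmax w z = v" by (rule fmax_unique) (use Fle Fv Flt in auto)
  have lw: "length w = m" using lw' unfolding w'_eq by simp
  have sw: "sorted w" using sw' unfolding w'_eq by simp
  have pw: "\<forall>a\<in>set w. 1 \<le> a" using pw' unfolding w'_eq by simp
  have lz: "length z = n" using lz'' n1 unfolding z_eq by simp
  have sz: "sorted z" unfolding z_eq using sy(2) zv by (simp add: less_imp_le)
  have pz: "\<forall>a\<in>set z. 1 \<le> a" using pg pw' unfolding z_eq g_eq w'_eq by simp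
  have adjx: "adj x w z"
  proof -
    have "\<forall>h. F w z h \<le> int (length z) - int x" using Fle lz xn by (smt (verit) of_nat_less_iff)
    thus ?thesis using Fform[OF sw sz, of x] lw lz xn nm by auto
  qed
  have nadj: "\<not> adj n w z"
  proof
    assume "adj n w z"
    hence "F w z v \<le> 0" using Fform[OF sw sz, of n] lw lz nm by auto
    thus False using Fv by simp
  qed
  have PSw: "PS \<sigma> \<sigma>b S w"
  proof (rule PS_transfer[OF len_\<sigma>b _ last_\<sigma>b])
    show "length S = length \<sigma>" using T by blast
    show "PS \<sigma> \<sigma>b S w'" using T by blast
    show "sorted w'" "sorted w" by (fact sw', fact sw)
    show "w' \<noteq> []" unfolding w'_eq by simp
    have wne: "w \<noteq> []" using lw xn nm by auto
    thus "w \<noteq> []" .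
    fix u assume "\<exists>a\<in>set w'. u < a"
    then obtain a where a: "a \<in> set w'" "u < a" by blast
    have "a \<le> last w'" by (rule sorted_le_last[OF sw' a(1)])
    moreover have "last w' = last w" "last w \<in> set w" using wne unfolding w'_eq by simp_all
    ultimately have "u < last w" using a(2) by simp
    thus "\<exists>a\<in>set w. u < a" using \<open>last w \<in> set w\<close> by blast
  qed
  have ltl: "length (tl \<tau>b) = length (tl \<tau>)" using len_\<tau>b by simp
  have PTy: "PT (tl \<tau>) (tl \<tau>b) y Ts'"
  proof -
    have "PT (tl \<tau>) (tl \<tau>b) (y @ z'') Ts'" using T g_eq by simp
    moreover have "tl \<tau> \<noteq> [] \<longrightarrow> hd (tl \<tau>b) \<le> length y" using hb ly unfolding p_def by simp
    ultimately show ?thesis using PT_app[OF _ ltl] by blast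
  qed
  have rowy: "rowOK (hd \<tau>) y" unfolding rowOK_def using ly sy(1) pg g_eq unfolding p_def by auto
  have adj1y: "adj (hd \<tau>b) z y"
  proof -
    have "hd \<tau>b = 1" using hd_\<tau>b tne by simp
    have "z!0 < y!(length y - 1)" using z_eq vyl yne unfolding yl_def by (simp add: last_conv_nth)
    hence "adj 1 z y" unfolding adj1 by simp
    thus ?thesis using \<open>hd \<tau>b = 1\<close> by simp
  qed
  have PTz: "PT \<tau> \<tau>b z (y # Ts')" using PT_cons[OF tne len_\<tau>b] rowy adj1y PTy by blast
  have lTs: "length (y # Ts') = length \<tau>" using T tne by simp
  have "mset w + mset z + mset y = mset w' + mset g" unfolding w'_eq z_eq g_eq by simp
  hence cont: "wcont (S@[w,z]@(y#Ts')) = c" using T wcont_E by metis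
  have inA: "(S,w,z,y#Ts') \<in> Tup \<sigma> \<sigma>b \<tau> \<tau>b m n x c"
    unfolding Tup_iff using T lTs PSw lw sw pw adjx lz sz pz PTz cont by blast
  have "fwd (w,z) = (insort v w, remove1 v z)" unfolding fwd_def Let_def using fm by simp
  hence sf: "snd (fwd (w,z)) = z''" using z_eq by simp
  have "\<not> (\<exists>a\<in>set (snd (fwd (w,z))). a < last (hd (y # Ts')))" unfolding sf using z_ge unfolding yl_def by force
  hence inBad: "(S,w,z,y#Ts') \<in> Bad \<sigma> \<sigma>b \<tau> \<tau>b m n x c" unfolding Bad_def using inA nadj tne by blast
  have PsiE_eq: "PsiE (hd \<tau>) (S,w',g,Ts') = (S,w,z,y#Ts')"
    unfolding PsiE_def p_def[symmetric] by (simp add: v_def w_def y_def z''_def z_def)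
  show "PsiE (hd \<tau>) (S,w',g,Ts') \<in> Bad \<sigma> \<sigma>b \<tau> \<tau>b m n x c" using inBad PsiE_eq by simp
  have "insort v w = w'" unfolding w'_eq using wv by (simp add: insort_is_Cons)
  moreover have "remove1 v z = z''" unfolding z_eq by simp
  ultimately have "PhiE (S,w,z,y#Ts') = (S,w',g,Ts')" unfolding PhiE_def using fm g_eq by simp
  thus "PhiE (PsiE (hd \<tau>) (S,w',g,Ts')) = (S,w',g,Ts')" using PsiE_eq by simp
qed

lemma Bad_to_E:
  assumes tne: "\<tau> \<noteq> []" and hb: "tl \<tau> \<noteq> [] \<longrightarrow> hd (tl \<tau>b) \<le> hd \<tau>"
    and t: "(S,w,z,Ts) \<in> Bad \<sigma> \<sigma>b \<tau> \<tau>b m n x c"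
  shows "PhiE (S,w,z,Ts) \<in> Tup \<sigma> \<sigma>b (tl \<tau>) (tl \<tau>b) (m+1) (n-1+hd \<tau>) n c"
    and "PsiE (hd \<tau>) (PhiE (S,w,z,Ts)) = (S,w,z,Ts)"
proof -
  have tA: "(S,w,z,Ts) \<in> Tup \<sigma> \<sigma>b \<tau> \<tau>b m n x c" and nadj: "\<not> adj n w z"
    and bad: "\<not> (\<exists>a\<in>set (snd (fwd (w,z))). a < last (hd Ts))" using t unfolding Bad_def by auto
  note T = tA[unfolded Tup_iff]
  have nC: "(S,w,z,Ts) \<notin> Tup \<sigma> \<sigma>b \<tau> \<tau>b m n n c" unfolding Tup_iff using nadj by blast
  have M: "0 < F w z (fmax w z)" using notC[OF tA] nC by simp
  have posz: "\<forall>a\<in>set z. 1 \<le> a" using T by blast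
  have sw: "sorted w" "sorted z" using T by blast+
  have n1: "1 \<le> n" using xn by simp
  define p where "p = hd \<tau>"
  have p1: "1 \<le> p" using hd_\<tau> tne unfolding p_def by simp
  have "length Ts = length \<tau>" using T by blast
  then obtain y Ts' where Ts_eq: "Ts = y # Ts'" using tne by (cases Ts) auto
  define v where "v = fmax w z"
  have vz: "v \<in> set z" unfolding v_def by (rule fmax_mem[OF posz M])
  define z'' where "z'' = remove1 v z"
  have fw: "fwd (w,z) = (insort v w, remove1 v z)" unfolding fwd_def Let_def v_def by simp
  have PTc: "rowOK (hd \<tau>) y \<and> adj (hd \<tau>b) z y \<and> PT (tl \<tau>) (tl \<tau>b) y Ts'"
    using PT_cons[OF tne len_\<tau>b] T Ts_eq by blast
  have ly: "length y = p" and sy: "sorted y" and py: "\<forall>a\<in>set y. 1 \<le> a" using PTc unfolding rowOK_def p_def by auto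
  have yne: "y \<noteq> []" using ly p1 by auto
  define yl where "yl = last y"
  have yl_in: "yl \<in> set y" unfolding yl_def using yne by simp
  have yl_ge: "\<forall>a\<in>set y. a \<le> yl" unfolding yl_def using sorted_le_last[OF sy] by blast
  have "adj 1 z y" using PTc hd_\<tau>b tne by simp
  hence "z!0 < yl" unfolding adj1 yl_def using yne by (simp add: last_conv_nth)
  moreover have zne: "z \<noteq> []" using vz by auto
  ultimately obtain a where a: "a \<in> set z" "a < yl" using sorted_first_ex[OF sw(2) zne] by blast
  have z_ge: "\<forall>b\<in>set z''. yl \<le> b" using bad unfolding fw z''_def Ts_eq yl_def by (auto simp: not_less)
  have vyl: "v < yl"
  proof (cases "a = v")
    case True thus ?thesis using a by simp
  next
    case False
    hence "a \<in> set z''" using a unfolding z''_def by simp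
    thus ?thesis using z_ge a by force
  qed
  have zv: "\<forall>b\<in>set z''. v < b" using z_ge vyl by force
  have cz: "int (cle z'' h) = int (cle z h) - ind (v \<le> h)" for h unfolding z''_def by (rule cle_remove1[OF vz])
  have "cle z'' v = 0" using zv by (intro cle_none) blast
  hence "cle z v = 1" using cz[of v] by simp
  hence "F w z v = 1 - int (clt w v)" unfolding F_def by simp
  hence cw: "clt w v = 0" and Fv: "F w z v = 1" using M unfolding v_def[symmetric] by simp_all
  have Fle: "F w z h \<le> 1" for h using fmax_max[of w z h] Fv unfolding v_def by simp
  have wv: "\<forall>a\<in>set w. v \<le> a" by (rule clt_zero[OF cw])
  define w' where "w' = insort v w"
  have w'_eq: "w' = v # w" unfolding w'_def using wv by (simp add: insort_is_Cons)
  define g where "g = y @ z''"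
  have lw': "length w' = m + 1" using T unfolding w'_eq by simp
  have sw': "sorted w'" using sw(1) wv unfolding w'_eq by simp
  have pw': "\<forall>a\<in>set w'. 1 \<le> a" using T posz vz unfolding w'_eq by auto
  have lz'': "length z'' = n - 1" using T vz unfolding z''_def by (simp add: length_remove1)
  have lg: "length g = n - 1 + hd \<tau>" unfolding g_def using ly lz'' p_def by simp
  have sz'': "sorted z''" using sw(2) unfolding z''_def by (simp add: sorted_remove1)
  have sg: "sorted g" unfolding g_def sorted_append using sy sz'' yl_ge z_ge by force
  have pg: "\<forall>a\<in>set g. 1 \<le> a" unfolding g_def z''_def using py posz by (auto dest: notin_set_remove1[THEN contrapos_nn] set_remove1_subset[THEN subsetD])
  have Fg: "\<forall>h. F w' g h \<le> int (length g) - int n"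
  proof
    fix h
    have eq1: "F w' g h = int (cle y h) + int (cle z'' h) - (int (clt w h) + ind (v < h))"
      unfolding F_def g_def w'_eq using clt_cons[of v w h] by (simp add: cle_append)
    show "F w' g h \<le> int (length g) - int n"
    proof (cases "h < yl")
      case True
      have "cle z'' h = 0" using z_ge True by (intro cle_none) force
      moreover have "cle y h < length y" by (rule cle_lt_len[OF yl_in True])
      ultimately show ?thesis using eq1 lg ly n1 p_def by (simp add: ind_def)
    next
      case False
      have vh: "v < h" using vyl False by simp
      have "cle y h \<le> length y" by (rule cle_le_len)
      moreover have "F w z h \<le> 1" by (rule Fle)
      moreover have "int (cle z'' h) = int (cle z h) - 1" using cz[of h] vh by (simp add: ind_def)
      ultimately show ?thesis using eq1 lg ly n1 p_def vh unfolding F_def by (simp add: ind_def)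
    qed
  qed
  have adjn: "adj n w' g" using Fform[OF sw' sg, of n] Fg lw' lg nm p1 p_def by auto
  have PSw: "PS \<sigma> \<sigma>b S w'"
  proof (rule PS_transfer[OF len_\<sigma>b _ last_\<sigma>b])
    show "length S = length \<sigma>" using T by blast
    show "PS \<sigma> \<sigma>b S w" using T by blast
    show "sorted w" "sorted w'" by (fact sw(1), fact sw')
    show "w \<noteq> []" using T xn nm by auto
    show "w' \<noteq> []" unfolding w'_eq by simp
    fix u assume "\<exists>a\<in>set w. u < a" thus "\<exists>a\<in>set w'. u < a" unfolding w'_eq by auto
  qed
  have ltl: "length (tl \<tau>b) = length (tl \<tau>)" using len_\<tau>b by simp
  have PTg: "PT (tl \<tau>) (tl \<tau>b) g Ts'"
  proof -
    have "tl \<tau> \<noteq> [] \<longrightarrow> hd (tl \<tau>b) \<le> length y" using hb ly unfolding p_def by simp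
    thus ?thesis unfolding g_def using PT_app[OF _ ltl] PTc by blast
  qed
  have lTs0: "length Ts = length \<tau>" using T by blast
  have lTs': "length Ts' = length (tl \<tau>)" using lTs0 Ts_eq by simp
  have "mset w + mset z + mset y = mset w' + mset g" unfolding w'_eq g_def z''_def using vz by simp
  hence cont: "wcont (S@[w',g]@Ts') = c" using T wcont_E Ts_eq by metis
  have PhiE_eq: "PhiE (S,w,z,Ts) = (S,w',g,Ts')"
    unfolding PhiE_def Ts_eq by (simp add: v_def[symmetric] w'_def g_def z''_def)
  have "(S,w',g,Ts') \<in> Tup \<sigma> \<sigma>b (tl \<tau>) (tl \<tau>b) (m+1) (n-1+hd \<tau>) n c"
    unfolding Tup_iff using T lTs' PSw lw' sw' pw' adjn lg sg pg PTg cont by blast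
  thus "PhiE (S,w,z,Ts) \<in> Tup \<sigma> \<sigma>b (tl \<tau>) (tl \<tau>b) (m+1) (n-1+hd \<tau>) n c" using PhiE_eq by simp
  have "insort v z'' = z" unfolding z''_def by (rule insort_remove1[OF vz sw(2)])
  hence "PsiE (hd \<tau>) (S,w',g,Ts') = (S,w,z,Ts)"
    unfolding PsiE_def using w'_eq ly Ts_eq p_def unfolding g_def by simp
  thus "PsiE (hd \<tau>) (PhiE (S,w,z,Ts)) = (S,w,z,Ts)" using PhiE_eq by simp
qed

lemma E_bij:
  assumes tne: "\<tau> \<noteq> []" and hb: "tl \<tau> \<noteq> [] \<longrightarrow> hd (tl \<tau>b) \<le> hd \<tau>"
  shows "card (Tup \<sigma> \<sigma>b (tl \<tau>) (tl \<tau>b) (m+1) (n-1+hd \<tau>) n c) = card (Bad \<sigma> \<sigma>b \<tau> \<tau>b m n x c)"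
proof -
  let ?E = "Tup \<sigma> \<sigma>b (tl \<tau>) (tl \<tau>b) (m+1) (n-1+hd \<tau>) n c" and ?Bd = "Bad \<sigma> \<sigma>b \<tau> \<tau>b m n x c"
  have "bij_betw (PsiE (hd \<tau>)) ?E ?Bd"
  proof (rule bij_betw_byWitness[where f'=PhiE])
    show "\<forall>a\<in>?E. PhiE (PsiE (hd \<tau>) a) = a"
    proof
      fix e assume e: "e \<in> ?E"
      obtain S w z Ts where "e = (S,w,z,Ts)" using prod_cases4 by blast
      thus "PhiE (PsiE (hd \<tau>) e) = e" using E_to_Bad(2)[OF tne hb] e by simp
    qed
    show "\<forall>a\<in>?Bd. PsiE (hd \<tau>) (PhiE a) = a"
    proof
      fix e assume e: "e \<in> ?Bd"
      obtain S w z Ts where "e = (S,w,z,Ts)" using prod_cases4 by blast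
      thus "PsiE (hd \<tau>) (PhiE e) = e" using Bad_to_E(2)[OF tne hb] e by simp
    qed
    show "PsiE (hd \<tau>) ` ?E \<subseteq> ?Bd"
    proof
      fix b assume "b \<in> PsiE (hd \<tau>) ` ?E"
      then obtain e where e: "e \<in> ?E" "b = PsiE (hd \<tau>) e" by blast
      obtain S w z Ts where "e = (S,w,z,Ts)" using prod_cases4 by blast
      thus "b \<in> ?Bd" using E_to_Bad(1)[OF tne hb] e by simp
    qed
    show "PhiE ` ?Bd \<subseteq> ?E"
    proof
      fix b assume "b \<in> PhiE ` ?Bd"
      then obtain e where e: "e \<in> ?Bd" "b = PhiE e" by blast
      obtain S w z Ts where "e = (S,w,z,Ts)" using prod_cases4 by blast
      thus "b \<in> ?E" using Bad_to_E(1)[OF tne hb] e by simp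
    qed
  qed
  thus ?thesis by (rule bij_betw_same_card)
qed

end

lemma hd_tl_nth:
  assumes "1 < length xs" shows "hd (tl xs) = xs ! 1" "hd xs = xs ! 0"
proof -
  obtain a r where xs: "xs = a # r" using assms by (cases xs) auto
  obtain b r' where r: "r = b # r'" using assms xs by (cases r) auto
  show "hd (tl xs) = xs ! 1" "hd xs = xs ! 0" unfolding xs r by simp_all
qed

theorem corollary2p8:
  fixes \<sigma> \<tau> \<sigma>b \<tau>b :: "nat list" and m n x :: nat
  assumes comp_\<sigma>: "\<forall>a\<in>set \<sigma>. 1 \<le> a"
    and comp_\<tau>: "\<forall>a\<in>set \<tau>. 1 \<le> a"
    and len_\<sigma>b: "length \<sigma>b = length \<sigma>"
    and len_\<tau>b: "length \<tau>b = length \<tau>"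
    and last_\<sigma>b: "\<sigma> \<noteq> [] \<longrightarrow> last \<sigma>b = 1"
    and hd_\<tau>b: "\<tau> \<noteq> [] \<longrightarrow> hd \<tau>b = 1"
    and ov_\<sigma>: "\<forall>i. i + 1 < length \<sigma> \<longrightarrow> \<sigma>b ! i \<le> min (\<sigma> ! i) (\<sigma> ! (i + 1))"
    and ov_\<tau>: "\<forall>i. 0 < i \<and> i < length \<tau> \<longrightarrow> \<tau>b ! i \<le> min (\<tau> ! i) (\<tau> ! (i - 1))"
    and "x < n" and "n \<le> m"
  shows "skew_schur (\<sigma> @ [m, n] @ \<tau>) (\<sigma>b @ [x] @ \<tau>b) c
           - skew_schur (\<sigma> @ [m + 1, n - 1] @ \<tau>) (\<sigma>b @ [x] @ \<tau>b) c
         = skew_schur (\<sigma> @ [m, n] @ \<tau>) (\<sigma>b @ [n] @ \<tau>b) c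
           + (if \<tau> = [] then 0
              else skew_schur (\<sigma> @ [m + 1, n - 1 + hd \<tau>] @ tl \<tau>) (\<sigma>b @ [n] @ tl \<tau>b) c)"
proof -
  note xn = \<open>x < n\<close> and nm = \<open>n \<le> m\<close>
  interpret H: hyp \<sigma> \<tau> \<sigma>b \<tau>b m n x c
    by unfold_locales (use assms in auto)
  have n1: "1 \<le> n" using xn by simp
  have vs: "\<forall>i. Suc i < length \<sigma> \<longrightarrow> \<sigma>b!i \<le> min (\<sigma>!i) (\<sigma>!Suc i)" using ov_\<sigma> by simp
  have lastS: "\<sigma> \<noteq> [] \<longrightarrow> 1 \<le> last \<sigma>" using comp_\<sigma> by auto
  have vl: "\<And>a1. 1 \<le> a1 \<Longrightarrow> \<sigma> \<noteq> [] \<longrightarrow> last \<sigma>b \<le> last \<sigma> \<and> last \<sigma>b \<le> a1" using last_\<sigma>b lastS by auto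
  have hdT: "\<tau> \<noteq> [] \<longrightarrow> 1 \<le> hd \<tau>" using comp_\<tau> by auto
  have vt: "\<forall>j. Suc j < length \<tau> \<longrightarrow> \<tau>b!Suc j \<le> min (\<tau>!j) (\<tau>!Suc j)"
  proof (intro allI impI)
    fix j assume "Suc j < length \<tau>"
    thus "\<tau>b!Suc j \<le> min (\<tau>!j) (\<tau>!Suc j)" using ov_\<tau>[rule_format, of "Suc j"] by auto
  qed
  have hb: "tl \<tau> \<noteq> [] \<longrightarrow> hd (tl \<tau>b) \<le> hd \<tau>"
  proof
    assume "tl \<tau> \<noteq> []"
    hence l: "1 < length \<tau>" by (cases \<tau>) auto
    hence "\<tau>b!1 \<le> min (\<tau>!1) (\<tau>!0)" using ov_\<tau>[rule_format, of 1] by simp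
    moreover have "hd (tl \<tau>b) = \<tau>b!1" "hd \<tau> = \<tau>!0" using hd_tl_nth[of \<tau>b] hd_tl_nth[of \<tau>] l len_\<tau>b by simp_all
    ultimately show "hd (tl \<tau>b) \<le> hd \<tau>" by simp
  qed
  have hb2: "tl \<tau> \<noteq> [] \<longrightarrow> hd (tl \<tau>b) \<le> hd (tl \<tau>)"
  proof
    assume "tl \<tau> \<noteq> []"
    hence l: "1 < length \<tau>" by (cases \<tau>) auto
    hence "\<tau>b!1 \<le> min (\<tau>!1) (\<tau>!0)" using ov_\<tau>[rule_format, of 1] by simp
    moreover have "hd (tl \<tau>b) = \<tau>b!1" "hd (tl \<tau>) = \<tau>!1" using hd_tl_nth[of \<tau>b] hd_tl_nth[of \<tau>] l len_\<tau>b by simp_all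
    ultimately show "hd (tl \<tau>b) \<le> hd (tl \<tau>)" by simp
  qed
  have vtt: "\<forall>j. Suc j < length (tl \<tau>) \<longrightarrow> tl \<tau>b!Suc j \<le> min (tl \<tau>!j) (tl \<tau>!Suc j)"
  proof (intro allI impI)
    fix j assume j: "Suc j < length (tl \<tau>)"
    hence "\<tau>b!Suc (Suc j) \<le> min (\<tau>!Suc (Suc j)) (\<tau>!Suc j)" using ov_\<tau>[rule_format, of "Suc (Suc j)"] by auto
    thus "tl \<tau>b!Suc j \<le> min (tl \<tau>!j) (tl \<tau>!Suc j)" using j len_\<tau>b by (simp add: nth_tl)
  qed
  have ltl: "length (tl \<tau>b) = length (tl \<tau>)" using len_\<tau>b by simp
  have vA: "overlap_valid (\<sigma>@[m,n]@\<tau>) (\<sigma>b@[x]@\<tau>b)"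
    by (rule valid_gen[OF len_\<sigma>b len_\<tau>b vs vl _ _ _ vt]) (use xn nm n1 hd_\<tau>b hdT in auto)
  have vC: "overlap_valid (\<sigma>@[m,n]@\<tau>) (\<sigma>b@[n]@\<tau>b)"
    by (rule valid_gen[OF len_\<sigma>b len_\<tau>b vs vl _ _ _ vt]) (use xn nm n1 hd_\<tau>b hdT in auto)
  have vE: "\<tau> \<noteq> [] \<Longrightarrow> overlap_valid (\<sigma>@[m+1,n-1+hd \<tau>]@tl \<tau>) (\<sigma>b@[n]@tl \<tau>b)"
    by (rule valid_gen[OF len_\<sigma>b ltl vs vl _ _ _ vtt]) (use xn nm n1 hb hb2 hdT in auto)
  let ?A = "Tup \<sigma> \<sigma>b \<tau> \<tau>b m n x c" and ?C = "Tup \<sigma> \<sigma>b \<tau> \<tau>b m n n c"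
  let ?B = "Tup \<sigma> \<sigma>b \<tau> \<tau>b (m+1) (n-1) x c" and ?Bd = "Bad \<sigma> \<sigma>b \<tau> \<tau>b m n x c"
  let ?E = "Tup \<sigma> \<sigma>b (tl \<tau>) (tl \<tau>b) (m+1) (n-1+hd \<tau>) n c"
  have sA: "skew_schur (\<sigma> @ [m, n] @ \<tau>) (\<sigma>b @ [x] @ \<tau>b) c = int (card ?A)"
    using skew_schur_words[OF vA] card_Tup(1)[OF len_\<sigma>b len_\<tau>b] by simp
  have sC: "skew_schur (\<sigma> @ [m, n] @ \<tau>) (\<sigma>b @ [n] @ \<tau>b) c = int (card ?C)"
    using skew_schur_words[OF vC] card_Tup(1)[OF len_\<sigma>b len_\<tau>b] by simp
  have sE: "\<tau> \<noteq> [] \<Longrightarrow> skew_schur (\<sigma> @ [m + 1, n - 1 + hd \<tau>] @ tl \<tau>) (\<sigma>b @ [n] @ tl \<tau>b) c = int (card ?E)"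
    using skew_schur_words[OF vE] card_Tup(1)[OF len_\<sigma>b ltl] by simp
  have fA: "finite ?A" by (rule card_Tup(2)[OF len_\<sigma>b len_\<tau>b finite_words])
  have CA: "?C \<subseteq> ?A" by (rule H.TC_sub)
  have cardA: "card ?A = card ?C + card (?A - ?C)"
  proof -
    have "?A = ?C \<union> (?A - ?C)" using CA by blast
    hence "card ?A = card (?C \<union> (?A - ?C))" by simp
    also have "\<dots> = card ?C + card (?A - ?C)"
      by (rule card_Un_disjoint) (use fA CA finite_subset in auto)
    finally show ?thesis .
  qed
  have fD: "finite (?A - ?C)" using fA by simp
  have BdE: "\<tau> \<noteq> [] \<Longrightarrow> card ?Bd = card ?E" using H.E_bij[OF _ hb] by simp
  have Bd0: "\<tau> = [] \<Longrightarrow> ?Bd = {}" unfolding Bad_def by auto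
  show ?thesis
  proof (cases "2 \<le> n \<or> \<tau> = []")
    case True
    have vB: "overlap_valid (\<sigma>@[m+1,n-1]@\<tau>) (\<sigma>b@[x]@\<tau>b)"
      by (rule valid_gen[OF len_\<sigma>b len_\<tau>b vs vl _ _ _ vt]) (use xn nm n1 hd_\<tau>b hdT True in auto)
    have sB: "skew_schur (\<sigma> @ [m + 1, n - 1] @ \<tau>) (\<sigma>b @ [x] @ \<tau>b) c = int (card ?B)"
      using skew_schur_words[OF vB] card_Tup(1)[OF len_\<sigma>b len_\<tau>b] by simp
    note dd = H.diff_decomp[OF True]
    have "card (?A - ?C) = card (Phi ` ?B \<union> ?Bd)" using dd(1) by simp
    also have "\<dots> = card (Phi ` ?B) + card ?Bd"
      by (rule card_Un_disjoint) (use fD dd(1,2) finite_subset in auto)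
    also have "card (Phi ` ?B) = card ?B" by (rule card_image[OF dd(3)])
    finally have "card (?A - ?C) = card ?B + card ?Bd" .
    thus ?thesis using cardA sA sB sC sE BdE Bd0 by auto
  next
    case False
    hence n1': "n = 1" "\<tau> \<noteq> []" using n1 by auto
    have nvB: "\<not> overlap_valid (\<sigma>@[m+1,n-1]@\<tau>) (\<sigma>b@[x]@\<tau>b)"
    proof
      assume v: "overlap_valid (\<sigma>@[m+1,n-1]@\<tau>) (\<sigma>b@[x]@\<tau>b)"
      have "Suc (length \<sigma>) < length (\<sigma>b@[x]@\<tau>b)" using len_\<sigma>b len_\<tau>b n1'(2) by simp
      hence "(\<sigma>b@[x]@\<tau>b)!Suc (length \<sigma>) \<le> (\<sigma>@[m+1,n-1]@\<tau>)!Suc (length \<sigma>)"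
        using v unfolding overlap_valid_def by fastforce
      moreover have "(\<sigma>b@[x]@\<tau>b)!Suc (length \<sigma>) = hd \<tau>b"
        using len_\<sigma>b n1'(2) len_\<tau>b by (cases \<tau>b) (auto simp: nth_append)
      moreover have "(\<sigma>@[m+1,n-1]@\<tau>)!Suc (length \<sigma>) = 0" using n1'(1) by (simp add: nth_append)
      ultimately show False using hd_\<tau>b n1'(2) by simp
    qed
    have sB: "skew_schur (\<sigma> @ [m + 1, n - 1] @ \<tau>) (\<sigma>b @ [x] @ \<tau>b) c = 0"
      using nvB unfolding skew_schur_def by simp
    have "card (?A - ?C) = card ?Bd" using H.diff_n1[OF n1'] by simp
    thus ?thesis using cardA sA sB sC sE BdE n1'(2) by auto
  qed
qed

end
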